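(* Let $0<\varepsilon\le1$. The series $\sum_{j=1}^\infty\frac{\phi_j(x)\phi_j(y)}{\lambda_j^2}$ converges uniformly for $(x,y)\in[0,1]^2\setminus(0,\varepsilon)^2$. For all $0\le x,y\le1$ this series is absolutely convergent, and $$\sum_{j=1}^\infty\frac{\phi_j(x)\phi_j(y)}{\lambda_j^2}=K_2(x,y).$$
   Context: Let $K:[0,1]\times[0,1]\to\mathbb R$ be defined by $K(x,y)=\frac12-\{(xy)^{-1}\}$ if $0<x,y\le 1$, and $K(x,y)=0$ if $0\le x,y\le1$ and $xy=0$, where $\{\alpha\}=\alpha-\lfloor\alpha\rfloor$. Define $K_2(x,y)=\int_0^1K(x,z)K(z,y)\,dz$ for $0\le x,y\le1$. Let $L^2([0,1])$ denote the space of real-valued Lebesgue measurable square-integrable functions on $[0,1]$, with $\langle f,g\rangle=\int_0^1 f(x)g(x)\,dx$ and $\|f\|=\langle f,f\rangle^{1/2}$. A function $\phi$ is an eigenfunction of $K$ (with eigenvalue $\lambda\in\mathbb R$) if $\phi\in L^2([0,1])$, $\|\phi\|>0$, and $\phi(x)=\lambda\int_0^1 K(x,y)\phi(y)\,dy$ for every $x\in[0,1]$. Let $\phi_1,\phi_2,\ldots$ be a maximal orthonormal system in $L^2([0,1])$ of eigenfunctions of $K$, $\phi_j$ having the nonzero real eigenvalue $\lambda_j$, numbered so that $0<|\lambda_1|\le|\lambda_2|\le\cdots$ and $\lambda_j\ge\lambda_{j+1}$ whenever $|\lambda_j|=|\lambda_{j+1}|$. *)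

theory Defs
  imports "HOL-Analysis.Analysis"
begin

definition K :: "real \<Rightarrow> real \<Rightarrow> real" where
  "K x y = (if x * y = 0 then 0 else 1/2 - frac (1 / (x * y)))"

abbreviation int01 :: "(real \<Rightarrow> real) \<Rightarrow> real" where
  "int01 f \<equiv> integral\<^sup>L (lebesgue_on {0..1}) f"

definition K2 :: "real \<Rightarrow> real \<Rightarrow> real" where
  "K2 x y = int01 (\<lambda>z. K x z * K z y)"

definition L2_01 :: "(real \<Rightarrow> real) set" where
  "L2_01 = {f. f \<in> borel_measurable (lebesgue_on {0..1})
               \<and> integrable (lebesgue_on {0..1}) (\<lambda>x. (f x)\<^sup>2)}"

definition inner01 :: "(real \<Rightarrow> real) \<Rightarrow> (real \<Rightarrow> real) \<Rightarrow> real" where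
  "inner01 f g = int01 (\<lambda>x. f x * g x)"

definition norm01 :: "(real \<Rightarrow> real) \<Rightarrow> real" where
  "norm01 f = sqrt (inner01 f f)"

definition eigenfun :: "(real \<Rightarrow> real) \<Rightarrow> real \<Rightarrow> bool" where
  "eigenfun phi lam \<longleftrightarrow> phi \<in> L2_01 \<and> norm01 phi > 0 \<and>
     (\<forall>x\<in>{0..1}. phi x = lam * int01 (\<lambda>y. K x y * phi y))"

text \<open>phi (indexed from 0, i.e. phi 0 is the paper's phi_1) is a maximal orthonormal
  system of eigenfunctions of K, phi j having the nonzero eigenvalue lam j, ordered as in the paper.\<close>
definition max_eigen_system :: "(nat \<Rightarrow> real \<Rightarrow> real) \<Rightarrow> (nat \<Rightarrow> real) \<Rightarrow> bool" where
  "max_eigen_system phi lam \<longleftrightarrow>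
     (\<forall>j. eigenfun (phi j) (lam j) \<and> lam j \<noteq> 0) \<and>
     (\<forall>i j. inner01 (phi i) (phi j) = (if i = j then 1 else 0)) \<and>
     (\<forall>psi mu. eigenfun psi mu \<and> mu \<noteq> 0 \<longrightarrow> \<not> (\<forall>j. inner01 psi (phi j) = 0)) \<and>
     0 < \<bar>lam 0\<bar> \<and>
     (\<forall>j. \<bar>lam j\<bar> \<le> \<bar>lam (Suc j)\<bar>) \<and>
     (\<forall>j. \<bar>lam j\<bar> = \<bar>lam (Suc j)\<bar> \<longrightarrow> lam j \<ge> lam (Suc j))"

end

theory Submission
  imports Defs "HOL-Library.Diagonal_Subsequence"
begin

abbreviation "LM \<equiv> lebesgue_on {0..1::real}"

lemma LM_finite: "finite_measure LM"
  by (rule finite_measure_lebesgue_on) simp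

lemma space_LM[simp]: "space LM = {0..1}" by simp

lemma int_const: "integrable LM (\<lambda>x. c::real)"
  using finite_measure.integrable_const[OF LM_finite] by blast

lemma L2I: "f \<in> borel_measurable LM \<Longrightarrow> integrable LM (\<lambda>x. (f x)\<^sup>2) \<Longrightarrow> f \<in> L2_01"
  by (simp add: L2_01_def)

lemma L2_meas: "f \<in> L2_01 \<Longrightarrow> f \<in> borel_measurable LM"
  by (simp add: L2_01_def)

lemma L2_sq: "f \<in> L2_01 \<Longrightarrow> integrable LM (\<lambda>x. (f x)\<^sup>2)"
  by (simp add: L2_01_def)

lemma L2_prod: assumes "f \<in> L2_01" "g \<in> L2_01" shows "integrable LM (\<lambda>x. f x * g x)"
proof (rule Bochner_Integration.integrable_bound)
  show "integrable LM (\<lambda>x. ((f x)\<^sup>2 + (g x)\<^sup>2)/2)"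
    using L2_sq[OF assms(1)] L2_sq[OF assms(2)] by auto
  show "(\<lambda>x. f x * g x) \<in> borel_measurable LM" using assms by (intro borel_measurable_times L2_meas)
  show "AE x in LM. norm (f x * g x) \<le> norm (((f x)\<^sup>2 + (g x)\<^sup>2)/2)"
  proof (rule AE_I2)
    fix x
    have "2 * \<bar>f x * g x\<bar> \<le> (f x)\<^sup>2 + (g x)\<^sup>2"
    proof -
      have "0 \<le> (\<bar>f x\<bar> - \<bar>g x\<bar>)\<^sup>2" by simp
      then show ?thesis by (simp add: power2_diff abs_mult)
    qed
    then show "norm (f x * g x) \<le> norm (((f x)\<^sup>2 + (g x)\<^sup>2)/2)" by simp
  qed
qed

lemma L2_bounded: assumes "f \<in> borel_measurable LM" "\<And>x. x \<in> {0..1} \<Longrightarrow> \<bar>f x\<bar> \<le> B"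
  shows "f \<in> L2_01"
proof (rule L2I[OF assms(1)], rule Bochner_Integration.integrable_bound[OF int_const[of "B\<^sup>2"]])
  show "(\<lambda>x. (f x)\<^sup>2) \<in> borel_measurable LM" using assms(1) by measurable
  show "AE x in LM. norm ((f x)\<^sup>2) \<le> norm (B\<^sup>2)"
  proof (rule AE_I2)
    fix x assume "x \<in> space LM"
    then have "\<bar>f x\<bar> \<le> B" using assms(2) by auto
    then have "\<bar>f x\<bar>\<^sup>2 \<le> B\<^sup>2" by (intro power_mono) auto
    then show "norm ((f x)\<^sup>2) \<le> norm (B\<^sup>2)"
      by simp
  qed
qed

lemma L2_add: "f \<in> L2_01 \<Longrightarrow> g \<in> L2_01 \<Longrightarrow> (\<lambda>x. f x + g x) \<in> L2_01"
  apply (rule L2I, intro borel_measurable_add L2_meas, assumption, assumption)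
  apply (simp add: power2_sum)
  apply (intro Bochner_Integration.integrable_add L2_sq, assumption, assumption)
  using Bochner_Integration.integrable_mult_right[OF L2_prod[of f g], of 2] by (simp add: mult.assoc)

lemma L2_cmult: "f \<in> L2_01 \<Longrightarrow> (\<lambda>x. c * f x) \<in> L2_01"
  apply (rule L2I, intro borel_measurable_times L2_meas borel_measurable_const, assumption)
  by (simp add: power_mult_distrib L2_sq)

lemma L2_minus: "f \<in> L2_01 \<Longrightarrow> (\<lambda>x. - f x) \<in> L2_01"
  using L2_cmult[of f "-1"] by simp

lemma L2_diff: "f \<in> L2_01 \<Longrightarrow> g \<in> L2_01 \<Longrightarrow> (\<lambda>x. f x - g x) \<in> L2_01"
  using L2_add[of f "\<lambda>x. - g x"] L2_minus[of g] by simp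

lemma L2_zero: "(\<lambda>x. 0) \<in> L2_01"
  by (rule L2_bounded[of _ 0]) auto

lemma L2_sum: "(\<And>j. j \<in> A \<Longrightarrow> f j \<in> L2_01) \<Longrightarrow> (\<lambda>x. \<Sum>j\<in>A. f j x) \<in> L2_01"
proof (induction A rule: infinite_finite_induct)
  case (insert a A) then show ?case using L2_add[of "f a" "\<lambda>x. \<Sum>j\<in>A. f j x"] by simp
qed (auto simp: L2_zero)

lemma L2_int: assumes "f \<in> L2_01" shows "integrable LM f"
  using L2_prod[OF assms L2_bounded[of "\<lambda>x. 1" 1]] by simp

lemma ip_sym: "inner01 f g = inner01 g f"
  by (simp add: inner01_def mult.commute)

lemma ip_add: "f \<in> L2_01 \<Longrightarrow> g \<in> L2_01 \<Longrightarrow> h \<in> L2_01 \<Longrightarrow>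
   inner01 (\<lambda>x. f x + g x) h = inner01 f h + inner01 g h"
  by (simp add: inner01_def distrib_right L2_prod)

lemma ip_diff: "f \<in> L2_01 \<Longrightarrow> g \<in> L2_01 \<Longrightarrow> h \<in> L2_01 \<Longrightarrow>
   inner01 (\<lambda>x. f x - g x) h = inner01 f h - inner01 g h"
  by (simp add: inner01_def left_diff_distrib L2_prod)

lemma ip_cmult: "inner01 (\<lambda>x. c * f x) h = c * inner01 f h"
  by (simp add: inner01_def mult.assoc)

lemma ip_sum: "(\<And>j. j \<in> A \<Longrightarrow> f j \<in> L2_01) \<Longrightarrow> h \<in> L2_01 \<Longrightarrow>
   inner01 (\<lambda>x. \<Sum>j\<in>A. f j x) h = (\<Sum>j\<in>A. inner01 (f j) h)"
  unfolding inner01_def sum_distrib_right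
  by (rule Bochner_Integration.integral_sum) (auto intro: L2_prod)

lemma ip_nonneg: "inner01 f f \<ge> 0"
  by (simp add: inner01_def)

lemma ip_self_eq: "inner01 f f = (norm01 f)\<^sup>2"
  by (simp add: norm01_def ip_nonneg)

lemma CS_aux: assumes "f \<in> L2_01" "g \<in> L2_01"
  shows "(inner01 f g)\<^sup>2 \<le> inner01 f f * inner01 g g"
proof -
  have q: "0 \<le> inner01 f f + 2 * t * inner01 f g + t\<^sup>2 * inner01 g g" for t
  proof -
    have "0 \<le> inner01 (\<lambda>x. f x + t * g x) (\<lambda>x. f x + t * g x)" by (rule ip_nonneg)
    also have "\<dots> = inner01 f f + 2 * t * inner01 f g + t\<^sup>2 * inner01 g g"
      using assms L2_cmult[OF assms(2), of t]
      apply (simp add: ip_add L2_add ip_cmult)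
      apply (subst (1 2) ip_sym) apply (simp add: ip_add ip_cmult)
      by (simp add: ip_sym power2_eq_square algebra_simps)
    finally show ?thesis .
  qed
  show ?thesis
  proof (cases "inner01 g g = 0")
    case True
    have "inner01 f g = 0"
    proof (rule ccontr)
      assume ne: "inner01 f g \<noteq> 0"
      define t where "t = - (inner01 f f + 1) / (2 * inner01 f g)"
      have "2 * t * inner01 f g = - (inner01 f f + 1)" using ne by (simp add: t_def)
      with q[of t] True show False by simp
    qed
    then show ?thesis using True by simp
  next
    case False
    then have gp: "inner01 g g > 0" using ip_nonneg[of g] by simp
    define t where "t = - inner01 f g / inner01 g g"
    have "0 \<le> inner01 f f + 2 * t * inner01 f g + t\<^sup>2 * inner01 g g" by (rule q)
    also have "\<dots> = inner01 f f - (inner01 f g)\<^sup>2 / inner01 g g"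
      using gp by (simp add: t_def power2_eq_square field_simps)
    finally show ?thesis using gp by (simp add: field_simps)
  qed
qed

lemma CS: assumes "f \<in> L2_01" "g \<in> L2_01"
  shows "\<bar>inner01 f g\<bar> \<le> norm01 f * norm01 g"
proof -
  have "\<bar>inner01 f g\<bar> = sqrt ((inner01 f g)\<^sup>2)" by simp
  also have "\<dots> \<le> sqrt (inner01 f f * inner01 g g)" using CS_aux[OF assms] by (rule real_sqrt_le_mono)
  also have "\<dots> = norm01 f * norm01 g" by (simp add: norm01_def real_sqrt_mult)
  finally show ?thesis .
qed

lemma norm01_nonneg: "norm01 f \<ge> 0" by (simp add: norm01_def ip_nonneg)

lemma ip_null: "f \<in> L2_01 \<Longrightarrow> g \<in> L2_01 \<Longrightarrow> norm01 f = 0 \<Longrightarrow> inner01 f g = 0"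
  using CS[of f g] by simp

lemma ip_cong_null: "f \<in> L2_01 \<Longrightarrow> f' \<in> L2_01 \<Longrightarrow> g \<in> L2_01 \<Longrightarrow> norm01 (\<lambda>x. f x - f' x) = 0 \<Longrightarrow>
   inner01 f g = inner01 f' g"
  using ip_null[OF L2_diff[of f f'], of g] ip_diff[of f f' g] by simp

lemma ip_cong: "(\<And>x. x \<in> {0..1} \<Longrightarrow> f x = f' x) \<Longrightarrow> (\<And>x. x \<in> {0..1} \<Longrightarrow> g x = g' x) \<Longrightarrow>
   inner01 f g = inner01 f' g'"
  unfolding inner01_def by (rule Bochner_Integration.integral_cong) auto

lemma L2_cong: "f \<in> L2_01 \<Longrightarrow> (\<And>x. x \<in> {0..1} \<Longrightarrow> f x = f' x) \<Longrightarrow> f' \<in> L2_01"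
  unfolding L2_01_def
  apply safe
   apply (erule measurable_cong[THEN iffD1, rotated]) apply simp
  using Bochner_Integration.integrable_cong[of LM LM "\<lambda>x. (f x)\<^sup>2" "\<lambda>x. (f' x)\<^sup>2"] by auto

lemma borel_LM: "g \<in> borel_measurable borel \<Longrightarrow> g \<in> borel_measurable LM"
  apply (rule measurable_restrict_space1)
  apply (rule measurable_completion)
  by simp

lemma K_borel: "(\<lambda>p. K (fst p) (snd p)) \<in> borel_measurable (borel \<Otimes>\<^sub>M borel)"
  unfolding K_def frac_def by measurable

lemma K_borel2: "case_prod K \<in> borel_measurable (borel \<Otimes>\<^sub>M borel)"
  using K_borel by (simp add: case_prod_beta')

lemma K_bound: "\<bar>K x y\<bar> \<le> 1/2"
proof -
  have "0 \<le> frac (1/(x*y))" "frac (1/(x*y)) < 1" by (rule frac_ge_0, rule frac_lt_1)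
  moreover have "\<And>t::real. 0 \<le> t \<Longrightarrow> t < 1 \<Longrightarrow> \<bar>1/2 - t\<bar> \<le> 1/2" by arith
  ultimately show ?thesis unfolding K_def by auto
qed

lemma K_sym: "K x y = K y x"
  unfolding K_def by (simp add: mult.commute)

lemma K_0[simp]: "K 0 y = 0"
  unfolding K_def by simp

lemma Kx_meas: "(\<lambda>y. K x y) \<in> borel_measurable LM"
  apply (rule borel_LM)
  using measurable_compose[OF measurable_Pair[OF measurable_const[of x] measurable_ident_sets[OF refl]] K_borel2]
  by simp

lemma Kx_L2: "(\<lambda>y. K x y) \<in> L2_01"
  by (rule L2_bounded[OF Kx_meas, of _ "1/2"]) (rule K_bound)

lemma measure_LM: "measure LM {0..1} = 1"
  by (simp add: measure_restrict_space)

lemma int_le_const: fixes f :: "real \<Rightarrow> real" assumes "integrable LM f" "\<And>x. x \<in> {0..1} \<Longrightarrow> f x \<le> c"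
  shows "integral\<^sup>L LM f \<le> c"
proof -
  have "integral\<^sup>L LM f \<le> integral\<^sup>L LM (\<lambda>x. c)"
    by (rule integral_mono[OF assms(1) int_const]) (use assms(2) in auto)
  also have "\<dots> = c" using measure_LM by simp
  finally show ?thesis .
qed

lemma ipKK: "inner01 (\<lambda>y. K x y) (\<lambda>y. K x y) \<le> 1/4"
  unfolding inner01_def
proof (rule int_le_const)
  show "integrable LM (\<lambda>xa. K x xa * K x xa)" using L2_prod[OF Kx_L2 Kx_L2] .
  fix y
  have "\<bar>K x y\<bar> * \<bar>K x y\<bar> \<le> 1/2 * (1/2)" using K_bound by (intro mult_mono) auto
  then show "K x y * K x y \<le> 1/4" by (simp add: abs_mult[symmetric])
qed

lemma normK: "norm01 (\<lambda>y. K x y) \<le> 1/2"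
proof -
  have "norm01 (\<lambda>y. K x y) \<le> sqrt (1/4)" unfolding norm01_def by (rule real_sqrt_le_mono[OF ipKK])
  also have "sqrt (1/4) = (1/2::real)" by (simp add: real_sqrt_divide)
  finally show ?thesis .
qed

definition Kop :: "(real \<Rightarrow> real) \<Rightarrow> real \<Rightarrow> real" where
  "Kop u x = int01 (\<lambda>y. K x y * u y)"

lemma Kop_ip: "Kop u x = inner01 (\<lambda>y. K x y) u"
  by (simp add: Kop_def inner01_def)

lemma Kop_bound: "u \<in> L2_01 \<Longrightarrow> \<bar>Kop u x\<bar> \<le> norm01 u / 2"
proof -
  assume u: "u \<in> L2_01"
  have "\<bar>inner01 (\<lambda>y. K x y) u\<bar> \<le> norm01 (\<lambda>y. K x y) * norm01 u" by (rule CS[OF Kx_L2 u])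
  also have "\<dots> \<le> 1/2 * norm01 u" by (rule mult_right_mono[OF normK norm01_nonneg])
  finally show ?thesis unfolding Kop_ip by simp
qed

lemma sf_LM: "sigma_finite_measure LM"
  using LM_finite finite_measure_def by blast

lemma psf_LM: "pair_sigma_finite LM LM"
  using LM_finite by (simp add: pair_sigma_finite_def finite_measure_def)

lemma K_prod_meas: "(\<lambda>p. K (fst p) (snd p)) \<in> borel_measurable (LM \<Otimes>\<^sub>M LM)"
proof -
  have "(\<lambda>p. (fst p, snd p)) \<in> measurable (LM \<Otimes>\<^sub>M LM) (borel \<Otimes>\<^sub>M borel)"
    by (intro measurable_Pair measurable_compose[OF measurable_fst borel_LM[OF measurable_ident_sets[OF refl]]]
          measurable_compose[OF measurable_snd borel_LM[OF measurable_ident_sets[OF refl]]])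
  from measurable_compose[OF this K_borel2] show ?thesis by simp
qed

lemma Kop_meas: assumes "u \<in> L2_01" shows "Kop u \<in> borel_measurable LM"
proof -
  have "(\<lambda>p. K (fst p) (snd p) * u (snd p)) \<in> borel_measurable (LM \<Otimes>\<^sub>M LM)"
    by (intro borel_measurable_times K_prod_meas measurable_compose[OF measurable_snd L2_meas[OF assms]])
  then have "case_prod (\<lambda>x y. K x y * u y) \<in> borel_measurable (LM \<Otimes>\<^sub>M LM)"
    by (simp add: case_prod_beta')
  from sigma_finite_measure.borel_measurable_lebesgue_integral[OF sf_LM this]
  show ?thesis unfolding Kop_def by simp
qed

lemma Kop_L2: "u \<in> L2_01 \<Longrightarrow> Kop u \<in> L2_01"
  by (rule L2_bounded[OF Kop_meas Kop_bound])

lemma Kop_selfadj: assumes u: "u \<in> L2_01" and v: "v \<in> L2_01"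
  shows "inner01 (Kop u) v = inner01 u (Kop v)"
proof -
  interpret P: pair_sigma_finite LM LM by (rule psf_LM)
  define f where "f x y = K x y * u y * v x" for x y
  have um: "u \<in> borel_measurable LM" and vm: "v \<in> borel_measurable LM" using u v by (auto intro: L2_meas)
  have fm: "case_prod f \<in> borel_measurable (LM \<Otimes>\<^sub>M LM)"
  proof -
    have "(\<lambda>p. K (fst p) (snd p) * u (snd p) * v (fst p)) \<in> borel_measurable (LM \<Otimes>\<^sub>M LM)"
      by (intro borel_measurable_times K_prod_meas measurable_compose[OF measurable_snd um]
           measurable_compose[OF measurable_fst vm])
    then show ?thesis by (simp add: f_def case_prod_beta')
  qed
  have ui: "integrable LM u" by (rule L2_int[OF u])
  have Kui: "integrable LM (\<lambda>y. K x y * u y)" for x by (rule L2_prod[OF Kx_L2 u])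
  have int: "integrable (LM \<Otimes>\<^sub>M LM) (case_prod f)"
  proof (rule P.Fubini_integrable[OF fm])
    have nm: "(\<lambda>x. \<integral>y. norm (f x y) \<partial>LM) \<in> borel_measurable LM"
    proof -
      have "case_prod (\<lambda>x y. norm (f x y)) \<in> borel_measurable (LM \<Otimes>\<^sub>M LM)"
        using measurable_compose[OF fm borel_measurable_norm] by (simp add: case_prod_beta' o_def)
      from sigma_finite_measure.borel_measurable_lebesgue_integral[OF sf_LM this] show ?thesis .
    qed
    have A: "integrable LM (\<lambda>x. \<integral>y. norm (f x y) \<partial>LM)"
    proof (rule Bochner_Integration.integrable_bound)
      show "integrable LM (\<lambda>x. \<bar>v x\<bar> * (\<integral>y. \<bar>u y\<bar> \<partial>LM))"
        using L2_int[OF v] by auto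
      show "(\<lambda>x. \<integral>y. norm (f x y) \<partial>LM) \<in> borel_measurable LM" using nm by simp
      show "AE x in LM. norm (\<integral>y. norm (f x y) \<partial>LM) \<le> norm (\<bar>v x\<bar> * (\<integral>y. \<bar>u y\<bar> \<partial>LM))"
      proof (rule AE_I2)
        fix x
        have "(\<integral>y. norm (f x y) \<partial>LM) = (\<integral>y. \<bar>K x y * u y\<bar> \<partial>LM) * \<bar>v x\<bar>"
          by (simp add: f_def abs_mult)
        also have "(\<integral>y. \<bar>K x y * u y\<bar> \<partial>LM) \<le> (\<integral>y. \<bar>u y\<bar> \<partial>LM)"
        proof (rule integral_mono)
          show "integrable LM (\<lambda>y. \<bar>K x y * u y\<bar>)" using Kui by auto
          show "integrable LM (\<lambda>y. \<bar>u y\<bar>)" using ui by auto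
          fix y
          have "\<bar>K x y\<bar> * \<bar>u y\<bar> \<le> 1 * \<bar>u y\<bar>" using K_bound[of x y] by (intro mult_right_mono) auto
          then show "\<bar>K x y * u y\<bar> \<le> \<bar>u y\<bar>" by (simp add: abs_mult)
        qed
        then have "(\<integral>y. \<bar>K x y * u y\<bar> \<partial>LM) * \<bar>v x\<bar> \<le> (\<integral>y. \<bar>u y\<bar> \<partial>LM) * \<bar>v x\<bar>"
          by (rule mult_right_mono) simp
        finally have "(\<integral>y. norm (f x y) \<partial>LM) \<le> \<bar>v x\<bar> * (\<integral>y. \<bar>u y\<bar> \<partial>LM)" by (simp add: mult.commute)
        moreover have "0 \<le> (\<integral>y. norm (f x y) \<partial>LM)" by simp
        ultimately show "norm (\<integral>y. norm (f x y) \<partial>LM) \<le> norm (\<bar>v x\<bar> * (\<integral>y. \<bar>u y\<bar> \<partial>LM))"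
          by simp
      qed
    qed
    then show "integrable LM (\<lambda>x. \<integral>y. norm (case_prod f (x, y)) \<partial>LM)" by simp
    show "AE x in LM. integrable LM (\<lambda>y. case_prod f (x, y))"
      using Kui by (simp add: f_def)
  qed
  have "(\<integral>y. (\<integral>x. f x y \<partial>LM) \<partial>LM) = (\<integral>x. (\<integral>y. f x y \<partial>LM) \<partial>LM)"
    by (rule P.Fubini_integral[OF int])
  moreover have "(\<integral>x. (\<integral>y. f x y \<partial>LM) \<partial>LM) = inner01 (Kop u) v"
    by (simp add: f_def inner01_def Kop_def)
  moreover have "(\<integral>y. (\<integral>x. f x y \<partial>LM) \<partial>LM) = inner01 u (Kop v)"
    unfolding f_def inner01_def Kop_def
    by (simp add: K_sym[of _ "_::real"] mult.commute mult.left_commute)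
  ultimately show ?thesis by simp
qed

lemma AE_countable_LM: assumes "countable N" shows "AE y in LM. y \<notin> N"
proof (rule AE_I')
  have "N \<inter> {0..1} \<in> null_sets lebesgue"
    using countable_imp_null_set_lborel[of "N \<inter> {0..1}"] assms
    by (auto intro: null_sets_completionI countable_subset)
  then show "N \<inter> {0..1} \<in> null_sets LM"
    by (subst null_sets_restrict_space) auto
qed auto

lemma K_cont_pt: assumes x: "x \<noteq> 0" and y: "y \<noteq> 0" and ni: "1/(x*y) \<notin> \<int>"
  shows "isCont (\<lambda>t. K t y) x"
proof -
  have c1: "isCont (\<lambda>t. 1/(t*y)) x" using x y by (intro continuous_intros) auto
  have c2: "isCont frac (1/(x*y))" using continuous_frac[OF ni] by simp
  have "isCont (\<lambda>t. 1/2 - frac (1/(t*y))) x"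
    using continuous_at_compose[OF c1 c2] by (intro continuous_intros) (simp add: o_def)
  moreover have ev: "\<forall>\<^sub>F t in nhds x. K t y = 1/2 - frac (1/(t*y))"
  proof -
    have "\<forall>\<^sub>F t in nhds x. t \<noteq> 0" using x by (intro t1_space_nhds)
    then show ?thesis by eventually_elim (use y in \<open>simp add: K_def\<close>)
  qed
  ultimately show ?thesis using isCont_cong[OF ev] by simp
qed

lemma bad_countable: assumes x0: "x \<noteq> 0" shows "countable {y::real. 1/(x*y) \<in> \<int>}"
proof -
  have "{y. 1/(x*y) \<in> \<int>} \<subseteq> range (\<lambda>m::int. 1/(x * of_int m))"
  proof
    fix y assume "y \<in> {y. 1/(x*y) \<in> \<int>}"
    then obtain m where m: "1/(x*y) = of_int m" by (auto elim: Ints_cases)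
    show "y \<in> range (\<lambda>m::int. 1/(x * of_int m))"
    proof (cases "x*y = 0")
      case True
      then have "y = 0" using x0 by auto
      then have "y = 1/(x * of_int (0::int))" by auto
      then show ?thesis by blast
    next
      case False
      have m0: "real_of_int m \<noteq> 0" using m False by auto
      have e: "x * (y * real_of_int m) = 1" using m False by (auto simp: field_simps)
      have "y = 1/(x * of_int m)"
        by (subst eq_divide_eq) (use m0 False e in \<open>auto simp: algebra_simps\<close>)
      then show ?thesis by blast
    qed
  qed
  then show ?thesis by (rule countable_subset) simp
qed

lemma Kdiff_L2: "(\<lambda>y. K x y - K z y) \<in> L2_01"
  by (intro L2_diff Kx_L2)

lemma Kdiff_seq: assumes x: "x \<noteq> 0" and z: "z \<longlonglongrightarrow> x"
  shows "(\<lambda>n. inner01 (\<lambda>y. K x y - K (z n) y) (\<lambda>y. K x y - K (z n) y)) \<longlonglongrightarrow> 0"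
proof -
  have "(\<lambda>n. integral\<^sup>L LM (\<lambda>y. (K x y - K (z n) y) * (K x y - K (z n) y))) \<longlonglongrightarrow> integral\<^sup>L LM (\<lambda>y. 0)"
  proof (rule integral_dominated_convergence[where w="\<lambda>y. 1"])
    show "(\<lambda>y. 0::real) \<in> borel_measurable LM" by simp
    show "(\<lambda>y. (K x y - K (z n) y) * (K x y - K (z n) y)) \<in> borel_measurable LM" for n
      by (intro borel_measurable_times borel_measurable_diff Kx_meas)
    show "integrable LM (\<lambda>y. 1::real)" by (rule int_const)
    show "AE y in LM. norm ((K x y - K (z n) y) * (K x y - K (z n) y)) \<le> 1" for n
    proof (rule AE_I2)
      fix y
      have "\<bar>K x y - K (z n) y\<bar> \<le> 1" using K_bound[of x y] K_bound[of "z n" y] by arith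
      then have "\<bar>K x y - K (z n) y\<bar> * \<bar>K x y - K (z n) y\<bar> \<le> 1 * 1" by (intro mult_mono) auto
      then show "norm ((K x y - K (z n) y) * (K x y - K (z n) y)) \<le> 1" by (simp add: abs_mult)
    qed
    have "AE y in LM. y \<notin> {0} \<union> {y. 1/(x*y) \<in> \<int>}"
      by (rule AE_countable_LM) (use bad_countable[OF x] in auto)
    then show "AE y in LM. (\<lambda>n. (K x y - K (z n) y) * (K x y - K (z n) y)) \<longlonglongrightarrow> 0"
    proof (rule eventually_mono)
      fix y assume "y \<notin> {0} \<union> {y. 1/(x*y) \<in> \<int>}"
      then have "isCont (\<lambda>t. K t y) x" using K_cont_pt[OF x] by auto
      then have "(\<lambda>n. K (z n) y) \<longlonglongrightarrow> K x y" using isCont_tendsto_compose[OF _ z] by blast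
      then have "(\<lambda>n. K x y - K (z n) y) \<longlonglongrightarrow> 0"
        using tendsto_diff[OF tendsto_const[of "K x y"]] by fastforce
      from tendsto_mult[OF this this] show "(\<lambda>n. (K x y - K (z n) y) * (K x y - K (z n) y)) \<longlonglongrightarrow> 0" by simp
    qed
  qed
  then show ?thesis by (simp add: inner01_def)
qed

lemma Kdiff_cont: assumes x: "x \<noteq> 0" and e: "e > 0"
  shows "\<exists>d>0. \<forall>z. \<bar>z - x\<bar> < d \<longrightarrow> norm01 (\<lambda>y. K x y - K z y) < e"
proof -
  let ?g = "\<lambda>z. inner01 (\<lambda>y. K x y - K z y) (\<lambda>y. K x y - K z y)"
  have "(?g \<longlongrightarrow> 0) (at x)"
  proof (subst tendsto_at_iff_sequentially, intro allI impI)
    fix X assume "\<forall>i. X i \<in> UNIV - {x}" "X \<longlonglongrightarrow> x"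
    from Kdiff_seq[OF x this(2)] show "(?g \<circ> X) \<longlonglongrightarrow> 0" by (simp add: o_def)
  qed
  then have "\<forall>\<^sub>F z in at x. dist (?g z) 0 < e\<^sup>2" using e by (simp add: tendsto_iff)
  then obtain d where d: "d > 0" "\<And>z. z \<noteq> x \<Longrightarrow> dist z x < d \<Longrightarrow> dist (?g z) 0 < e\<^sup>2"
    unfolding eventually_at by blast
  show ?thesis
  proof (intro exI[of _ d] conjI allI impI d(1))
    fix z assume "\<bar>z - x\<bar> < d"
    show "norm01 (\<lambda>y. K x y - K z y) < e"
    proof (cases "z = x")
      case True then show ?thesis using e by (simp add: norm01_def inner01_def)
    next
      case False
      then have "?g z < e\<^sup>2" using d(2)[of z] \<open>\<bar>z - x\<bar> < d\<close> ip_nonneg by (auto simp: dist_real_def)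
      then have "sqrt (?g z) < sqrt (e\<^sup>2)" by (rule real_sqrt_less_mono)
      then show ?thesis using e by (simp add: norm01_def)
    qed
  qed
qed

lemma K2_ip: "K2 x z = inner01 (\<lambda>y. K x y) (\<lambda>y. K z y)"
  unfolding K2_def inner01_def by (simp add: K_sym[of _ z])

lemma K2_diff_bound: "\<bar>K2 x z - K2 x' z'\<bar> \<le> (norm01 (\<lambda>y. K x y - K x' y) + norm01 (\<lambda>y. K z y - K z' y)) / 2"
proof -
  have e1: "inner01 (\<lambda>y. K x y - K x' y) (\<lambda>y. K z y) = K2 x z - K2 x' z"
    unfolding K2_ip by (rule ip_diff) (rule Kx_L2)+
  have e2: "inner01 (\<lambda>y. K x' y) (\<lambda>y. K z y - K z' y) = K2 x' z - K2 x' z'"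
  proof -
    have "inner01 (\<lambda>y. K x' y) (\<lambda>y. K z y - K z' y) = inner01 (\<lambda>y. K z y - K z' y) (\<lambda>y. K x' y)"
      by (rule ip_sym)
    also have "\<dots> = inner01 (\<lambda>y. K z y) (\<lambda>y. K x' y) - inner01 (\<lambda>y. K z' y) (\<lambda>y. K x' y)"
      by (rule ip_diff) (rule Kx_L2)+
    also have "inner01 (\<lambda>y. K z y) (\<lambda>y. K x' y) = inner01 (\<lambda>y. K x' y) (\<lambda>y. K z y)" by (rule ip_sym)
    also have "inner01 (\<lambda>y. K z' y) (\<lambda>y. K x' y) = inner01 (\<lambda>y. K x' y) (\<lambda>y. K z' y)" by (rule ip_sym)
    finally show ?thesis unfolding K2_ip .
  qed
  have eq: "K2 x z - K2 x' z' = inner01 (\<lambda>y. K x y - K x' y) (\<lambda>y. K z y) + inner01 (\<lambda>y. K x' y) (\<lambda>y. K z y - K z' y)"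
    unfolding e1 e2 by simp
  have "\<bar>K2 x z - K2 x' z'\<bar> \<le> norm01 (\<lambda>y. K x y - K x' y) * norm01 (\<lambda>y. K z y) + norm01 (\<lambda>y. K x' y) * norm01 (\<lambda>y. K z y - K z' y)"
  proof -
    have "\<bar>inner01 (\<lambda>y. K x y - K x' y) (\<lambda>y. K z y)\<bar> \<le> norm01 (\<lambda>y. K x y - K x' y) * norm01 (\<lambda>y. K z y)"
      by (rule CS[OF Kdiff_L2 Kx_L2])
    moreover have "\<bar>inner01 (\<lambda>y. K x' y) (\<lambda>y. K z y - K z' y)\<bar> \<le> norm01 (\<lambda>y. K x' y) * norm01 (\<lambda>y. K z y - K z' y)"
      by (rule CS[OF Kx_L2 Kdiff_L2])
    moreover have "\<bar>inner01 (\<lambda>y. K x y - K x' y) (\<lambda>y. K z y) + inner01 (\<lambda>y. K x' y) (\<lambda>y. K z y - K z' y)\<bar>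
      \<le> \<bar>inner01 (\<lambda>y. K x y - K x' y) (\<lambda>y. K z y)\<bar> + \<bar>inner01 (\<lambda>y. K x' y) (\<lambda>y. K z y - K z' y)\<bar>"
      by (rule abs_triangle_ineq)
    ultimately show ?thesis unfolding eq by linarith
  qed
  also have "\<dots> \<le> norm01 (\<lambda>y. K x y - K x' y) * (1/2) + (1/2) * norm01 (\<lambda>y. K z y - K z' y)"
  proof (rule add_mono)
    show "norm01 (\<lambda>y. K x y - K x' y) * norm01 (\<lambda>y. K z y) \<le> norm01 (\<lambda>y. K x y - K x' y) * (1/2)"
      by (rule mult_left_mono[OF normK norm01_nonneg])
    show "norm01 (\<lambda>y. K x' y) * norm01 (\<lambda>y. K z y - K z' y) \<le> (1/2) * norm01 (\<lambda>y. K z y - K z' y)"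
      by (rule mult_right_mono[OF normK norm01_nonneg])
  qed
  finally show ?thesis by (simp add: field_simps)
qed

lemma K2_cont: assumes "x \<noteq> 0" "z \<noteq> 0" shows "isCont (\<lambda>p. K2 (fst p) (snd p)) (x, z)"
proof (subst continuous_at_eps_delta, intro allI impI)
  fix e :: real assume e: "e > 0"
  obtain d1 where d1: "d1 > 0" "\<And>t. \<bar>t - x\<bar> < d1 \<Longrightarrow> norm01 (\<lambda>y. K x y - K t y) < e"
    using Kdiff_cont[OF assms(1) e] by blast
  obtain d2 where d2: "d2 > 0" "\<And>t. \<bar>t - z\<bar> < d2 \<Longrightarrow> norm01 (\<lambda>y. K z y - K t y) < e"
    using Kdiff_cont[OF assms(2) e] by blast
  show "\<exists>d>0. \<forall>p. dist p (x, z) < d \<longrightarrow> dist (K2 (fst p) (snd p)) (K2 (fst (x, z)) (snd (x, z))) < e"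
  proof (intro exI[of _ "min d1 d2"] conjI allI impI)
    show "min d1 d2 > 0" using d1 d2 by simp
    fix p :: "real \<times> real" assume "dist p (x, z) < min d1 d2"
    then have "\<bar>fst p - x\<bar> < d1" "\<bar>snd p - z\<bar> < d2"
      using dist_fst_le[of p "(x,z)"] dist_snd_le[of p "(x,z)"] by (auto simp: dist_real_def)
    then have "norm01 (\<lambda>y. K x y - K (fst p) y) < e" "norm01 (\<lambda>y. K z y - K (snd p) y) < e"
      using d1 d2 by auto
    then show "dist (K2 (fst p) (snd p)) (K2 (fst (x, z)) (snd (x, z))) < e"
      using K2_diff_bound[of x z "fst p" "snd p"] by (simp add: dist_real_def abs_minus_commute)
  qed
qed

lemma ip_null2: "f \<in> L2_01 \<Longrightarrow> g \<in> L2_01 \<Longrightarrow> norm01 g = 0 \<Longrightarrow> inner01 f g = 0"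
  using ip_null[of g f] ip_sym[of f g] by simp

lemma ip_cmult2: "inner01 h (\<lambda>x. c * f x) = c * inner01 h f"
  using ip_cmult[of c f h] ip_sym by metis

lemma ip_diff2: "h \<in> L2_01 \<Longrightarrow> f \<in> L2_01 \<Longrightarrow> g \<in> L2_01 \<Longrightarrow>
   inner01 h (\<lambda>x. f x - g x) = inner01 h f - inner01 h g"
  using ip_diff[of f g h] ip_sym by metis

lemma ip_add2: "h \<in> L2_01 \<Longrightarrow> f \<in> L2_01 \<Longrightarrow> g \<in> L2_01 \<Longrightarrow>
   inner01 h (\<lambda>x. f x + g x) = inner01 h f + inner01 h g"
  using ip_add[of f g h] ip_sym by metis

lemma ip_sum2: "(\<And>j. j \<in> A \<Longrightarrow> f j \<in> L2_01) \<Longrightarrow> h \<in> L2_01 \<Longrightarrow>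
   inner01 h (\<lambda>x. \<Sum>j\<in>A. f j x) = (\<Sum>j\<in>A. inner01 h (f j))"
  using ip_sum[of A f h] ip_sym by (metis (no_types, lifting) sum.cong)

lemma norm01_cong: "(\<And>x. x \<in> {0..1} \<Longrightarrow> f x = g x) \<Longrightarrow> norm01 f = norm01 g"
  unfolding norm01_def using ip_cong[of f g f g] by simp

lemma norm01_eq0: "(\<And>x. x \<in> {0..1} \<Longrightarrow> f x = 0) \<Longrightarrow> norm01 f = 0"
  using norm01_cong[of f "\<lambda>x. 0"] by (simp add: norm01_def inner01_def)

lemma norm_triangle01: assumes "f \<in> L2_01" "g \<in> L2_01"
  shows "norm01 (\<lambda>x. f x + g x) \<le> norm01 f + norm01 g"
proof -
  have "inner01 (\<lambda>x. f x + g x) (\<lambda>x. f x + g x) = inner01 f f + 2 * inner01 f g + inner01 g g"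
    using assms by (simp add: ip_add ip_add2 L2_add ip_sym[of g f])
  also have "\<dots> \<le> (norm01 f)\<^sup>2 + 2 * (norm01 f * norm01 g) + (norm01 g)\<^sup>2"
    using CS[OF assms] by (simp add: ip_self_eq)
  also have "\<dots> = (norm01 f + norm01 g)\<^sup>2" by (simp add: power2_sum)
  finally have "sqrt (inner01 (\<lambda>x. f x + g x) (\<lambda>x. f x + g x)) \<le> sqrt ((norm01 f + norm01 g)\<^sup>2)"
    by (rule real_sqrt_le_mono)
  then show ?thesis using norm01_nonneg[of f] norm01_nonneg[of g] by (simp add: norm01_def)
qed

lemma norm01_cmult: "norm01 (\<lambda>x. c * f x) = \<bar>c\<bar> * norm01 f"
proof -
  have "inner01 (\<lambda>x. c * f x) (\<lambda>x. c * f x) = c\<^sup>2 * inner01 f f"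
    by (simp add: ip_cmult ip_cmult2 power2_eq_square)
  then show ?thesis by (simp add: norm01_def real_sqrt_mult)
qed

lemma norm_diff_triangle01: assumes "f \<in> L2_01" "g \<in> L2_01" "m \<in> L2_01"
  shows "norm01 (\<lambda>x. f x - g x) \<le> norm01 (\<lambda>x. f x - m x) + norm01 (\<lambda>x. m x - g x)"
  using norm_triangle01[OF L2_diff[OF assms(1,3)] L2_diff[OF assms(3,2)]] by simp

lemma ip_self_diff_bound: assumes "f \<in> L2_01" "g \<in> L2_01"
  shows "\<bar>inner01 f f - inner01 g g\<bar> \<le> norm01 (\<lambda>x. f x - g x) * (norm01 f + norm01 g)"
proof -
  have "inner01 f f - inner01 g g = inner01 (\<lambda>x. f x - g x) f + inner01 g (\<lambda>x. f x - g x)"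
    using assms by (simp add: ip_diff ip_diff2 ip_sym[of g f])
  moreover have "\<bar>inner01 (\<lambda>x. f x - g x) f\<bar> \<le> norm01 (\<lambda>x. f x - g x) * norm01 f"
    by (rule CS[OF L2_diff[OF assms] assms(1)])
  moreover have "\<bar>inner01 g (\<lambda>x. f x - g x)\<bar> \<le> norm01 g * norm01 (\<lambda>x. f x - g x)"
    by (rule CS[OF assms(2) L2_diff[OF assms]])
  ultimately show ?thesis by (simp add: algebra_simps)
qed

locale ES =
  fixes phi :: "nat \<Rightarrow> real \<Rightarrow> real" and lam :: "nat \<Rightarrow> real"
  assumes ms: "max_eigen_system phi lam"
begin

lemma eig: "eigenfun (phi j) (lam j)" and lam_nz: "lam j \<noteq> 0"
  using ms by (auto simp: max_eigen_system_def)

lemma phi_L2: "phi j \<in> L2_01"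
  using eig by (simp add: eigenfun_def)

lemma phi_eq: "x \<in> {0..1} \<Longrightarrow> phi j x = lam j * Kop (phi j) x"
  using eig by (simp add: eigenfun_def Kop_def)

lemma orth: "inner01 (phi i) (phi j) = (if i = j then 1 else 0)"
  using ms by (simp add: max_eigen_system_def)

lemma maximal: "eigenfun psi mu \<Longrightarrow> mu \<noteq> 0 \<Longrightarrow> \<exists>j. inner01 psi (phi j) \<noteq> 0"
  using ms by (auto simp: max_eigen_system_def)

lemma lam_mono: "i \<le> j \<Longrightarrow> \<bar>lam i\<bar> \<le> \<bar>lam j\<bar>"
proof -
  have "incseq (\<lambda>j. \<bar>lam j\<bar>)" using ms by (intro incseq_SucI) (simp add: max_eigen_system_def)
  then show "i \<le> j \<Longrightarrow> \<bar>lam i\<bar> \<le> \<bar>lam j\<bar>" by (simp add: incseq_def)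
qed

definition a :: "nat \<Rightarrow> real \<Rightarrow> real" where "a j x = phi j x / lam j"

lemma Kop_phi: "x \<in> {0..1} \<Longrightarrow> Kop (phi j) x = a j x"
  using phi_eq[of x j] lam_nz[of j] by (simp add: a_def)

lemma ipK_phi: "x \<in> {0..1} \<Longrightarrow> inner01 (\<lambda>y. K x y) (phi j) = a j x"
  using Kop_phi Kop_ip by simp

lemma phi_0: "phi j 0 = 0"
  using phi_eq[of 0 j] by (simp add: Kop_def)

lemma a_0: "a j 0 = 0" by (simp add: a_def phi_0)

lemma a_L2: "a j \<in> L2_01"
  unfolding a_def using L2_cmult[OF phi_L2, of "1 / lam j" j] by simp

definition res :: "nat \<Rightarrow> (real \<Rightarrow> real) \<Rightarrow> real \<Rightarrow> real" where
  "res N f = (\<lambda>z. f z - (\<Sum>j<N. inner01 f (phi j) * phi j z))"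

lemma sumphi_L2: "(\<lambda>z. \<Sum>j<N. c j * phi j z) \<in> L2_01"
  by (intro L2_sum L2_cmult phi_L2)

lemma res_L2: "f \<in> L2_01 \<Longrightarrow> res N f \<in> L2_01"
  unfolding res_def by (intro L2_diff sumphi_L2)

lemma ip_sumphi: "g \<in> L2_01 \<Longrightarrow> inner01 (\<lambda>z. \<Sum>j<N. c j * phi j z) g = (\<Sum>j<N. c j * inner01 (phi j) g)"
  by (subst ip_sum) (auto intro: L2_cmult phi_L2 simp: ip_cmult)

lemma sum_orth: "(\<Sum>j<N. c j * inner01 (phi j) (phi i)) = (if i < N then c i else 0)"
  by (simp add: orth if_distrib[of "\<lambda>t. c _ * t"] sum.delta' cong: if_cong)

lemma res_ip: "f \<in> L2_01 \<Longrightarrow> g \<in> L2_01 \<Longrightarrow>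
  inner01 (res N f) g = inner01 f g - (\<Sum>j<N. inner01 f (phi j) * inner01 (phi j) g)"
  unfolding res_def by (simp add: ip_diff sumphi_L2 ip_sumphi)

lemma res_orth: "f \<in> L2_01 \<Longrightarrow> i < N \<Longrightarrow> inner01 (res N f) (phi i) = 0"
  by (simp add: res_ip phi_L2 sum_orth)

lemma res_self: assumes f: "f \<in> L2_01"
  shows "inner01 (res N f) (res N f) = inner01 f f - (\<Sum>j<N. (inner01 f (phi j))\<^sup>2)"
proof -
  have "inner01 (res N f) (res N f) = inner01 f (res N f) - (\<Sum>j<N. inner01 f (phi j) * inner01 (phi j) (res N f))"
    by (rule res_ip[OF f res_L2[OF f]])
  also have "(\<Sum>j<N. inner01 f (phi j) * inner01 (phi j) (res N f)) = 0"
    using res_orth[OF f] ip_sym by (intro sum.neutral) (metis lessThan_iff mult_zero_right)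
  also have "inner01 f (res N f) = inner01 f f - (\<Sum>j<N. (inner01 f (phi j))\<^sup>2)"
    using res_ip[OF f f] ip_sym[of f "res N f"] ip_sym[of f "phi _"] by (simp add: power2_eq_square)
  finally show ?thesis by simp
qed

lemma bessel: "f \<in> L2_01 \<Longrightarrow> (\<Sum>j<N. (inner01 f (phi j))\<^sup>2) \<le> inner01 f f"
  using res_self[of f N] ip_nonneg[of "res N f"] by simp

definition r :: "nat \<Rightarrow> real \<Rightarrow> real \<Rightarrow> real" where
  "r N x = (\<lambda>z. K x z - (\<Sum>j<N. a j x * phi j z))"

lemma r_res: "x \<in> {0..1} \<Longrightarrow> r N x = res N (\<lambda>y. K x y)"
  unfolding r_def res_def by (simp add: ipK_phi)

lemma r_L2: "r N x \<in> L2_01"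
  unfolding r_def by (intro L2_diff sumphi_L2 Kx_L2)

lemma r_0: "r N 0 = (\<lambda>z. 0)"
  by (simp add: r_def a_0)

lemma r_self: "x \<in> {0..1} \<Longrightarrow> inner01 (r N x) (r N x) = K2 x x - (\<Sum>j<N. (a j x)\<^sup>2)"
  using res_self[OF Kx_L2, of N x] by (simp add: r_res ipK_phi K2_ip)

lemma r_self_le: "x \<in> {0..1} \<Longrightarrow> inner01 (r N x) (r N x) \<le> 1/4"
proof -
  assume x: "x \<in> {0..1}"
  have "inner01 (r N x) (r N x) \<le> inner01 (\<lambda>y. K x y) (\<lambda>y. K x y)"
    using r_res[OF x] res_self[OF Kx_L2, of N x] by (simp add: sum_nonneg)
  then show ?thesis using ipKK[of x] by simp
qed

lemma r_norm: "x \<in> {0..1} \<Longrightarrow> norm01 (r N x) \<le> 1/2"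
proof -
  assume x: "x \<in> {0..1}"
  have "norm01 (r N x) \<le> sqrt (1/4)" unfolding norm01_def by (rule real_sqrt_le_mono[OF r_self_le[OF x]])
  also have "sqrt (1/4) = (1/2::real)" by (simp add: real_sqrt_divide)
  finally show ?thesis .
qed

lemma r_diff: assumes x: "x \<in> {0..1}" and z: "z \<in> {0..1}"
  shows "norm01 (\<lambda>y. r N x y - r N z y) \<le> norm01 (\<lambda>y. K x y - K z y)"
proof -
  let ?f = "\<lambda>y. K x y - K z y"
  have f: "?f \<in> L2_01" by (rule Kdiff_L2)
  have c: "inner01 ?f (phi j) = a j x - a j z" for j
    using ip_diff[OF Kx_L2 Kx_L2 phi_L2] ipK_phi[OF x] ipK_phi[OF z] by simp
  have eq: "(\<lambda>y. r N x y - r N z y) = res N ?f"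
    unfolding r_def res_def c by (rule ext) (simp add: left_diff_distrib sum_subtractf)
  have "inner01 (res N ?f) (res N ?f) \<le> inner01 ?f ?f"
    using res_self[OF f, of N] by (simp add: sum_nonneg)
  then show ?thesis unfolding eq norm01_def by (rule real_sqrt_le_mono)
qed

lemma K2_sym: "K2 x y = K2 y x"
  by (simp add: K2_ip ip_sym)

lemma r_ip: assumes x: "x \<in> {0..1}" and y: "y \<in> {0..1}"
  shows "inner01 (r N x) (r N y) = K2 x y - (\<Sum>j<N. a j x * a j y)"
proof -
  have "inner01 (r N x) (r N y) = inner01 (res N (\<lambda>z. K x z)) (r N y)" by (simp add: r_res[OF x])
  also have "\<dots> = inner01 (\<lambda>z. K x z) (r N y) - (\<Sum>j<N. inner01 (\<lambda>z. K x z) (phi j) * inner01 (phi j) (r N y))"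
    by (rule res_ip[OF Kx_L2 r_L2])
  also have "\<dots> = inner01 (\<lambda>z. K x z) (r N y) - (\<Sum>j<N. a j x * inner01 (phi j) (r N y))"
    by (simp add: ipK_phi[OF x])
  also have "(\<Sum>j<N. a j x * inner01 (phi j) (r N y)) = 0"
    using res_orth[OF Kx_L2, of _ N y] ip_sym r_res[OF y] by (intro sum.neutral) (metis lessThan_iff mult_zero_right)
  also have "inner01 (\<lambda>z. K x z) (r N y) = inner01 (r N y) (\<lambda>z. K x z)" by (rule ip_sym)
  also have "\<dots> = inner01 (res N (\<lambda>z. K y z)) (\<lambda>z. K x z)" by (simp add: r_res[OF y])
  also have "\<dots> = inner01 (\<lambda>z. K y z) (\<lambda>z. K x z) - (\<Sum>j<N. inner01 (\<lambda>z. K y z) (phi j) * inner01 (phi j) (\<lambda>z. K x z))"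
    by (rule res_ip[OF Kx_L2 Kx_L2])
  also have "\<dots> = K2 y x - (\<Sum>j<N. a j y * a j x)"
    using ipK_phi[OF y] ipK_phi[OF x] ip_sym[of "phi _" "\<lambda>z. K x z"]
    by (simp add: K2_ip)
  finally show ?thesis by (simp add: K2_sym[of y x] mult.commute)
qed

definition T :: "nat \<Rightarrow> (real \<Rightarrow> real) \<Rightarrow> real \<Rightarrow> real" where
  "T N u x = Kop u x - (\<Sum>j<N. a j x * inner01 (phi j) u)"

lemma T_ip: "x \<in> {0..1} \<Longrightarrow> u \<in> L2_01 \<Longrightarrow> T N u x = inner01 (r N x) u"
  using res_ip[OF Kx_L2, of u N x] by (simp add: T_def r_res Kop_ip ipK_phi)

lemma T_meas: "u \<in> L2_01 \<Longrightarrow> T N u \<in> borel_measurable LM"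
proof -
  assume u: "u \<in> L2_01"
  have "(\<lambda>x. \<Sum>j<N. a j x * inner01 (phi j) u) \<in> borel_measurable LM"
    by (intro borel_measurable_sum borel_measurable_times L2_meas[OF a_L2] borel_measurable_const)
  then show ?thesis unfolding T_def[abs_def] by (intro borel_measurable_diff Kop_meas[OF u])
qed

lemma T_bound: "x \<in> {0..1} \<Longrightarrow> u \<in> L2_01 \<Longrightarrow> \<bar>T N u x\<bar> \<le> norm01 u / 2"
proof -
  assume x: "x \<in> {0..1}" and u: "u \<in> L2_01"
  have "\<bar>T N u x\<bar> \<le> norm01 (r N x) * norm01 u" unfolding T_ip[OF x u] by (rule CS[OF r_L2 u])
  also have "\<dots> \<le> 1/2 * norm01 u" by (rule mult_right_mono[OF r_norm[OF x] norm01_nonneg])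
  finally show ?thesis by simp
qed

lemma T_L2: "u \<in> L2_01 \<Longrightarrow> T N u \<in> L2_01"
  by (rule L2_bounded[OF T_meas T_bound])

lemma T_0: "T N u 0 = 0"
  by (simp add: T_def Kop_def a_0)

lemma T_add: "u \<in> L2_01 \<Longrightarrow> v \<in> L2_01 \<Longrightarrow> T N (\<lambda>y. u y + v y) x = T N u x + T N v x"
  by (simp add: T_def Kop_ip ip_add2 Kx_L2 phi_L2 distrib_left sum.distrib)

lemma T_diff: "u \<in> L2_01 \<Longrightarrow> v \<in> L2_01 \<Longrightarrow> T N (\<lambda>y. u y - v y) x = T N u x - T N v x"
  by (simp add: T_def Kop_ip ip_diff2 Kx_L2 phi_L2 right_diff_distrib sum_subtractf)

lemma T_cmult: "T N (\<lambda>y. c * u y) x = c * T N u x"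
  by (simp add: T_def Kop_ip ip_cmult2 right_diff_distrib sum_distrib_left mult.left_commute)

lemma T_null: "u \<in> L2_01 \<Longrightarrow> v \<in> L2_01 \<Longrightarrow> norm01 (\<lambda>y. u y - v y) = 0 \<Longrightarrow> T N u x = T N v x"
proof -
  assume u: "u \<in> L2_01" and v: "v \<in> L2_01" and n: "norm01 (\<lambda>y. u y - v y) = 0"
  have "inner01 g u = inner01 g v" if g: "g \<in> L2_01" for g
    using ip_cong_null[OF u v g n] ip_sym by metis
  then show ?thesis by (simp add: T_def Kop_ip Kx_L2 phi_L2)
qed

lemma T_lip: assumes x: "x \<in> {0..1}" and z: "z \<in> {0..1}" and u: "u \<in> L2_01"
  shows "\<bar>T N u x - T N u z\<bar> \<le> norm01 (\<lambda>y. K x y - K z y) * norm01 u"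
proof -
  have "T N u x - T N u z = inner01 (\<lambda>y. r N x y - r N z y) u"
    using T_ip[OF x u] T_ip[OF z u] ip_diff[OF r_L2 r_L2 u] by simp
  then have "\<bar>T N u x - T N u z\<bar> \<le> norm01 (\<lambda>y. r N x y - r N z y) * norm01 u"
    using CS[OF L2_diff[OF r_L2 r_L2] u] by simp
  also have "\<dots> \<le> norm01 (\<lambda>y. K x y - K z y) * norm01 u"
    by (rule mult_right_mono[OF r_diff[OF x z] norm01_nonneg])
  finally show ?thesis .
qed

lemma T_norm: assumes u: "u \<in> L2_01" shows "norm01 (T N u) \<le> norm01 u / 2"
proof -
  have "inner01 (T N u) (T N u) \<le> (norm01 u / 2)\<^sup>2"
    unfolding inner01_def
  proof (rule int_le_const)
    show "integrable LM (\<lambda>x. T N u x * T N u x)" using L2_prod[OF T_L2 T_L2] u by blast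
    fix x :: real assume x: "x \<in> {0..1}"
    have "\<bar>T N u x\<bar> * \<bar>T N u x\<bar> \<le> (norm01 u / 2) * (norm01 u / 2)"
      using T_bound[OF x u] norm01_nonneg[of u] by (intro mult_mono) auto
    then show "T N u x * T N u x \<le> (norm01 u / 2)\<^sup>2" by (simp add: power2_eq_square abs_mult[symmetric])
  qed
  then have "norm01 (T N u) \<le> sqrt ((norm01 u / 2)\<^sup>2)" unfolding norm01_def by (rule real_sqrt_le_mono)
  then show ?thesis using norm01_nonneg[of u] by simp
qed

lemma ip_asum: "v \<in> L2_01 \<Longrightarrow> inner01 (\<lambda>x. \<Sum>j<N. a j x * c j) v = (\<Sum>j<N. c j * inner01 (phi j) v / lam j)"
proof -
  assume v: "v \<in> L2_01"
  have "inner01 (\<lambda>x. \<Sum>j<N. a j x * c j) v = (\<Sum>j<N. inner01 (\<lambda>x. a j x * c j) v)"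
    by (rule ip_sum) (auto intro: v L2_cmult[OF a_L2] simp: mult.commute)
  also have "\<dots> = (\<Sum>j<N. c j * inner01 (phi j) v / lam j)"
  proof (intro sum.cong refl)
    fix j
    have "(\<lambda>x. a j x * c j) = (\<lambda>x. (c j / lam j) * phi j x)" by (auto simp: a_def)
    then show "inner01 (\<lambda>x. a j x * c j) v = c j * inner01 (phi j) v / lam j"
      using ip_cmult[of "c j / lam j" "phi j" v] by simp
  qed
  finally show ?thesis .
qed

lemma T_selfadj: assumes u: "u \<in> L2_01" and v: "v \<in> L2_01"
  shows "inner01 (T N u) v = inner01 u (T N v)"
proof -
  have s: "(\<lambda>x. \<Sum>j<N. a j x * inner01 (phi j) w) \<in> L2_01" for w
    by (intro L2_sum) (simp add: mult.commute L2_cmult[OF a_L2])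
  have "inner01 (T N u) v = inner01 (Kop u) v - (\<Sum>j<N. inner01 (phi j) u * inner01 (phi j) v / lam j)"
    unfolding T_def[abs_def] by (simp add: ip_diff Kop_L2 u v s ip_asum)
  moreover have "inner01 u (T N v) = inner01 (Kop v) u - (\<Sum>j<N. inner01 (phi j) v * inner01 (phi j) u / lam j)"
    unfolding T_def[abs_def] ip_sym[of u] by (simp add: ip_diff Kop_L2 u v s ip_asum)
  moreover have "inner01 (Kop u) v = inner01 (Kop v) u"
    using Kop_selfadj[OF u v] ip_sym by metis
  ultimately show ?thesis by (simp add: mult.commute)
qed

lemma T_phi: "x \<in> {0..1} \<Longrightarrow> T N (phi i) x = (if i < N then 0 else a i x)"
  by (simp add: T_def Kop_phi sum_orth[of "\<lambda>j. a j x"])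

end

lemma extract_subseq:
  fixes F :: "nat \<Rightarrow> real \<Rightarrow> real" and W :: "real \<Rightarrow> real \<Rightarrow> real"
  assumes bnd: "\<And>k x. \<bar>F k x\<bar> \<le> B"
    and F0: "\<And>k. F k 0 = 0"
    and lip: "\<And>k x z. x \<in> {0..1} \<Longrightarrow> z \<in> {0..1} \<Longrightarrow> \<bar>F k x - F k z\<bar> \<le> W x z"
    and Wc: "\<And>x e. x \<in> {0<..1} \<Longrightarrow> e > 0 \<Longrightarrow> \<exists>d>0. \<forall>z. \<bar>z - x\<bar> < d \<longrightarrow> W x z < e"
  shows "\<exists>s. strict_mono s \<and> (\<forall>x\<in>{0..1}. convergent (\<lambda>i. F (s i) x))"
proof -
  obtain m :: "real \<Rightarrow> nat" where "bij_betw m \<rat> UNIV"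
    using countable_rat Rats_infinite by (erule countableE_infinite)
  then obtain r :: "nat \<Rightarrow> real" where bij: "bij_betw r UNIV \<rat>"
    using bij_betw_inv by blast
  have dense_r: "\<And>x y. x < y \<Longrightarrow> \<exists>n. x < r n \<and> r n < y"
    by (metis Rats_dense_in_real bij f_the_inv_into_f bij_betw_def)
  let ?P = "\<lambda>n. \<lambda>s. convergent (\<lambda>k. F (s k) (r n))"
  interpret nat: subseqs ?P
  proof (unfold convergent_def, unfold subseqs_def, auto)
    fix n :: nat and s :: "nat \<Rightarrow> nat" assume s: "strict_mono s"
    have "bounded {-B..B}"
      using bounded_closed_interval by auto
    moreover have "\<And>k. F (s k) (r n) \<in> {-B..B}"
      using bnd by (simp add: abs_le_iff minus_le_iff)
    ultimately have "\<exists>l s'. strict_mono s' \<and> ((\<lambda>k. F (s k) (r n)) \<circ> s') \<longlonglongrightarrow> l"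
      using compact_Icc compact_imp_seq_compact seq_compactE by metis
    thus "\<exists>s'. strict_mono (s'::nat\<Rightarrow>nat) \<and> (\<exists>l. (\<lambda>k. F (s (s' k)) (r n)) \<longlonglongrightarrow> l)"
      by (auto simp: comp_def)
  qed
  define d where "d = nat.diagseq"
  have subseq: "strict_mono d"
    unfolding d_def using nat.subseq_diagseq by auto
  have rat_cnv: "?P n d" for n
  proof -
    have Pn_seqseq: "?P n (nat.seqseq (Suc n))"
      by (rule nat.seqseq_holds)
    have 1: "(\<lambda>k. F ((nat.seqseq (Suc n) \<circ> (\<lambda>k. nat.fold_reduce (Suc n) k
      (Suc n + k))) k) (r n)) = (\<lambda>k. F (nat.seqseq (Suc n) k) (r n)) \<circ>
      (\<lambda>k. nat.fold_reduce (Suc n) k (Suc n + k))"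
      by auto
    have 2: "?P n (d \<circ> ((+) (Suc n)))"
      unfolding d_def nat.diagseq_seqseq 1
      by (intro convergent_subseq_convergent Pn_seqseq nat.subseq_diagonal_rest)
    then obtain L where 3: "(\<lambda>na. F (d (na + Suc n)) (r n)) \<longlonglongrightarrow> L"
      by (auto simp: add.commute dest: convergentD)
    then have "(\<lambda>k. F (d k) (r n)) \<longlonglongrightarrow> L"
      by (rule LIMSEQ_offset)
    then show ?thesis
      by (auto simp: convergent_def)
  qed
  have "convergent (\<lambda>i. F (d i) x)" if x: "x \<in> {0..1}" for x
  proof (cases "x = 0")
    case True then show ?thesis using F0 by (simp add: convergent_const)
  next
    case False
    then have x': "x \<in> {0<..1}" using x by auto
    have "Cauchy (\<lambda>i. F (d i) x)"
    proof (rule metric_CauchyI)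
      fix e :: real assume e: "e > 0"
      obtain d0 where d0: "d0 > 0" "\<And>z. \<bar>z - x\<bar> < d0 \<Longrightarrow> W x z < e/3"
        using Wc[OF x', of "e/3"] e by auto
      obtain n where n: "max 0 (x - d0) < r n" "r n < x"
        using dense_r[of "max 0 (x - d0)" x] x' d0 by auto
      have q01: "r n \<in> {0..1}" using n x' by auto
      have Wq: "W x (r n) < e/3" using d0(2)[of "r n"] n by auto
      have "Cauchy (\<lambda>k. F (d k) (r n))" using rat_cnv[of n] by (rule convergent_Cauchy)
      then obtain M where M: "\<And>i j. i \<ge> M \<Longrightarrow> j \<ge> M \<Longrightarrow> dist (F (d i) (r n)) (F (d j) (r n)) < e/3"
        using e unfolding Cauchy_def by (meson divide_pos_pos zero_less_numeral)
      show "\<exists>M. \<forall>i\<ge>M. \<forall>j\<ge>M. dist (F (d i) x) (F (d j) x) < e"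
      proof (intro exI allI impI)
        fix i j assume ij: "i \<ge> M" "j \<ge> M"
        have a1: "\<bar>F (d i) x - F (d i) (r n)\<bar> \<le> W x (r n)" by (rule lip[OF x q01])
        have a2: "\<bar>F (d j) x - F (d j) (r n)\<bar> \<le> W x (r n)" by (rule lip[OF x q01])
        have a3: "\<bar>F (d i) (r n) - F (d j) (r n)\<bar> < e/3" using M[OF ij] by (simp add: dist_real_def)
        show "dist (F (d i) x) (F (d j) x) < e"
          using a1 a2 a3 Wq unfolding dist_real_def by arith
      qed
    qed
    then show ?thesis by (simp add: Cauchy_convergent_iff)
  qed
  then show ?thesis using subseq by blast
qed

context ES begin

lemma T_Kop_orth: "(\<And>j. j < N \<Longrightarrow> inner01 h (phi j) = 0) \<Longrightarrow> T N h x = Kop h x"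
  unfolding T_def using ip_sym by (simp add: sum.neutral)

lemma eigen_bound:
  assumes h: "h \<in> L2_01" and hp: "norm01 h > 0" and mu: "mu \<noteq> 0"
    and ev: "norm01 (\<lambda>x. T N h x - mu * h x) = 0"
  shows "\<bar>mu\<bar> \<le> 1 / \<bar>lam N\<bar>"
proof -
  have Th: "T N h \<in> L2_01" by (rule T_L2[OF h])
  have muh: "(\<lambda>x. mu * h x) \<in> L2_01" by (rule L2_cmult[OF h])
  have ipT: "inner01 (T N h) g = mu * inner01 h g" if g: "g \<in> L2_01" for g
    using ip_cong_null[OF Th muh g ev] by (simp add: ip_cmult)
  have ipTphi: "mu * inner01 h (phi j) = inner01 h (T N (phi j))" for j
    using ipT[OF phi_L2] T_selfadj[OF h phi_L2] by simp
  have orthN: "inner01 h (phi j) = 0" if j: "j < N" for j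
  proof -
    have "inner01 h (T N (phi j)) = inner01 h (\<lambda>x. 0)"
      by (rule ip_cong) (use j in \<open>auto simp: T_phi\<close>)
    then have "mu * inner01 h (phi j) = 0" using ipTphi[of j] by (simp add: inner01_def)
    then show ?thesis using mu by simp
  qed
  have TK: "T N h x = Kop h x" for x by (rule T_Kop_orth[OF orthN])
  define psi where "psi x = (1/mu) * Kop h x" for x
  have psi: "psi \<in> L2_01" unfolding psi_def by (intro L2_cmult Kop_L2 h)
  have psih0: "norm01 (\<lambda>x. psi x - h x) = 0"
  proof -
    have "(\<lambda>x. psi x - h x) = (\<lambda>x. (1/mu) * (T N h x - mu * h x))"
      using mu by (auto simp: psi_def TK field_simps)
    then show ?thesis using ev norm01_cmult[of "1/mu" "\<lambda>x. T N h x - mu * h x"] by simp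
  qed
  have ippsi: "inner01 psi g = inner01 h g" if "g \<in> L2_01" for g
    by (rule ip_cong_null[OF psi h that psih0])
  have Kpsi: "Kop psi x = Kop h x" for x
    using ippsi[OF Kx_L2, of x] ip_sym by (metis Kop_ip)
  have npsi: "norm01 psi = norm01 h"
    unfolding norm01_def using ippsi[OF psi] ippsi[OF h] ip_sym by metis
  have "eigenfun psi (1/mu)"
    unfolding eigenfun_def
  proof (intro conjI ballI)
    show "psi \<in> L2_01" by (rule psi)
    show "norm01 psi > 0" using npsi hp by simp
    fix x :: real assume "x \<in> {0..1}"
    show "psi x = 1 / mu * int01 (\<lambda>y. K x y * psi y)"
      using Kpsi[of x] by (simp add: psi_def Kop_def)
  qed
  then obtain j where j: "inner01 psi (phi j) \<noteq> 0" using maximal mu by force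
  then have hj: "inner01 h (phi j) \<noteq> 0" using ippsi[OF phi_L2] by simp
  then have jN: "N \<le> j" using orthN not_le by blast
  have "inner01 h (T N (phi j)) = inner01 h (\<lambda>x. (1 / lam j) * phi j x)"
    by (rule ip_cong) (use jN in \<open>auto simp: T_phi a_def\<close>)
  then have "mu * inner01 h (phi j) = (1 / lam j) * inner01 h (phi j)"
    using ipTphi[of j] ip_cmult2[of h "1 / lam j" "phi j"] by simp
  then have mueq: "mu = 1 / lam j" using hj lam_nz[of j] by (simp add: field_simps)
  have "\<bar>lam N\<bar> \<le> \<bar>lam j\<bar>" by (rule lam_mono[OF jN])
  moreover have "\<bar>lam N\<bar> > 0" using lam_nz by simp
  ultimately show ?thesis using mueq by (simp add: abs_divide frac_le)
qed

lemma eigen_from_limit: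
  assumes h: "h \<in> L2_01" and hp: "norm01 h > 0" and rp: "q > 0"
    and TT: "\<And>x. x \<in> {0..1} \<Longrightarrow> T N (T N h) x = q\<^sup>2 * h x"
  shows "q \<le> 1 / \<bar>lam N\<bar>"
proof -
  define psi where "psi x = T N h x + q * h x" for x
  have psi: "psi \<in> L2_01" unfolding psi_def by (intro L2_add T_L2 L2_cmult h)
  show ?thesis
  proof (cases "norm01 psi = 0")
    case False
    then have pp: "norm01 psi > 0" using norm01_nonneg[of psi] by simp
    have "norm01 (\<lambda>x. T N psi x - q * psi x) = 0"
    proof (rule norm01_eq0)
      fix x :: real assume x: "x \<in> {0..1}"
      have "T N psi x = T N (T N h) x + q * T N h x"
        unfolding psi_def[abs_def] by (simp add: T_add T_L2 h L2_cmult T_cmult)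
      then show "T N psi x - q * psi x = 0" using TT[OF x] by (simp add: psi_def power2_eq_square algebra_simps)
    qed
    from eigen_bound[OF psi pp _ this] rp show ?thesis by simp
  next
    case True
    have "norm01 (\<lambda>x. T N h x - (- q) * h x) = 0" using True unfolding psi_def[abs_def] by simp
    from eigen_bound[OF h hp _ this] rp show ?thesis by simp
  qed
qed

lemma compact_step:
  assumes G: "\<And>k. G k \<in> L2_01" and nG: "\<And>k. norm01 (G k) \<le> 1" and rp: "q > 0"
    and Dlim: "(\<lambda>k. norm01 (\<lambda>x. T N (T N (G k)) x - q\<^sup>2 * G k x)) \<longlonglongrightarrow> 0"
    and nlim: "(\<lambda>k. inner01 (T N (G k)) (T N (G k))) \<longlonglongrightarrow> q\<^sup>2"
  shows "\<exists>h. h \<in> L2_01 \<and> norm01 h > 0 \<and> (\<forall>x\<in>{0..1}. T N (T N h) x = q\<^sup>2 * h x)"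
proof -
  define F where "F k = T N (G k)" for k
  have FL2: "F k \<in> L2_01" for k unfolding F_def by (rule T_L2[OF G])
  have Fb: "\<bar>F k x\<bar> \<le> 1/2" if "x \<in> {0..1}" for k x
    using T_bound[OF that G, of N k] nG[of k] unfolding F_def by linarith
  define F' where "F' k x = (if x \<in> {0..1} then F k x else 0)" for k x
  have "\<exists>s. strict_mono s \<and> (\<forall>x\<in>{0..1}. convergent (\<lambda>i. F' (s i) x))"
  proof (rule extract_subseq[where B="1/2" and W="\<lambda>x z. norm01 (\<lambda>y. K x y - K z y)"])
    show "\<bar>F' k x\<bar> \<le> 1/2" for k x using Fb by (simp add: F'_def)
    show "F' k 0 = 0" for k by (simp add: F'_def F_def T_0)
    show "\<bar>F' k x - F' k z\<bar> \<le> norm01 (\<lambda>y. K x y - K z y)" if "x \<in> {0..1}" "z \<in> {0..1}" for k x z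
    proof -
      have "\<bar>F k x - F k z\<bar> \<le> norm01 (\<lambda>y. K x y - K z y) * norm01 (G k)"
        unfolding F_def by (rule T_lip[OF that G])
      also have "\<dots> \<le> norm01 (\<lambda>y. K x y - K z y) * 1" by (rule mult_left_mono[OF nG norm01_nonneg])
      finally show ?thesis using that by (simp add: F'_def)
    qed
    show "\<exists>d>0. \<forall>z. \<bar>z - x\<bar> < d \<longrightarrow> norm01 (\<lambda>y. K x y - K z y) < e" if "x \<in> {0<..1}" "e > 0" for x e
      using Kdiff_cont[of x e] that by auto
  qed
  then obtain s where s: "strict_mono s" and cv: "\<And>x. x \<in> {0..1} \<Longrightarrow> convergent (\<lambda>i. F (s i) x)"
    by (auto simp: F'_def)
  define h where "h x = lim (\<lambda>i. F (s i) x)" for x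
  have hlim: "(\<lambda>i. F (s i) x) \<longlonglongrightarrow> h x" if "x \<in> {0..1}" for x
    using cv[OF that] by (simp add: h_def convergent_LIMSEQ_iff)
  have hb: "\<bar>h x\<bar> \<le> 1/2" if "x \<in> {0..1}" for x
  proof -
    have "(\<lambda>i. \<bar>F (s i) x\<bar>) \<longlonglongrightarrow> \<bar>h x\<bar>" by (rule tendsto_rabs[OF hlim[OF that]])
    then show ?thesis using Fb[OF that] by (intro LIMSEQ_le_const2) auto
  qed
  have hm: "h \<in> borel_measurable LM"
    by (rule borel_measurable_LIMSEQ_real[where u="\<lambda>i. F (s i)"]) (auto intro: L2_meas[OF FL2] hlim)
  have h: "h \<in> L2_01" by (rule L2_bounded[OF hm hb])
  have Fh: "(\<lambda>i. inner01 (\<lambda>x. F (s i) x - h x) (\<lambda>x. F (s i) x - h x)) \<longlonglongrightarrow> 0"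
  proof -
    have "(\<lambda>i. integral\<^sup>L LM (\<lambda>x. (F (s i) x - h x) * (F (s i) x - h x))) \<longlonglongrightarrow> integral\<^sup>L LM (\<lambda>x. 0)"
    proof (rule integral_dominated_convergence[where w="\<lambda>x. 1"])
      show "(\<lambda>x. 0::real) \<in> borel_measurable LM" by simp
      show "(\<lambda>x. (F (s i) x - h x) * (F (s i) x - h x)) \<in> borel_measurable LM" for i
        by (intro borel_measurable_times borel_measurable_diff L2_meas[OF FL2] hm)
      show "integrable LM (\<lambda>x. 1::real)" by (rule int_const)
      show "AE x in LM. norm ((F (s i) x - h x) * (F (s i) x - h x)) \<le> 1" for i
      proof (rule AE_I2)
        fix x assume "x \<in> space LM"
        then have x: "x \<in> {0..1}" by simp
        have "\<bar>F (s i) x - h x\<bar> \<le> 1" using Fb[OF x, of "s i"] hb[OF x] by arith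
        then have "\<bar>F (s i) x - h x\<bar> * \<bar>F (s i) x - h x\<bar> \<le> 1 * 1" by (intro mult_mono) auto
        then show "norm ((F (s i) x - h x) * (F (s i) x - h x)) \<le> 1" by (simp add: abs_mult)
      qed
      show "AE x in LM. (\<lambda>i. (F (s i) x - h x) * (F (s i) x - h x)) \<longlonglongrightarrow> 0"
      proof (rule AE_I2)
        fix x assume "x \<in> space LM"
        then have x: "x \<in> {0..1}" by simp
        have "(\<lambda>i. F (s i) x - h x) \<longlonglongrightarrow> 0" using hlim[OF x] by (simp add: LIM_zero)
        from tendsto_mult[OF this this] show "(\<lambda>i. (F (s i) x - h x) * (F (s i) x - h x)) \<longlonglongrightarrow> 0" by simp
      qed
    qed
    then show ?thesis by (simp add: inner01_def)
  qed
  have nFh: "(\<lambda>i. norm01 (\<lambda>x. F (s i) x - h x)) \<longlonglongrightarrow> 0"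
    using tendsto_real_sqrt[OF Fh] by (simp add: norm01_def)
  have nF: "norm01 (F k) \<le> 1/2" for k
    using T_norm[OF G, of N k] nG[of k] unfolding F_def by linarith
  have nh: "norm01 h \<le> 1/2"
    unfolding norm01_def
  proof -
    have "inner01 h h \<le> 1/4" unfolding inner01_def
    proof (rule int_le_const)
      show "integrable LM (\<lambda>x. h x * h x)" by (rule L2_prod[OF h h])
      fix x :: real assume x: "x \<in> {0..1}"
      have "\<bar>h x\<bar> * \<bar>h x\<bar> \<le> 1/2 * (1/2)" using hb[OF x] by (intro mult_mono) auto
      then show "h x * h x \<le> 1/4" by (simp add: abs_mult[symmetric])
    qed
    then have "sqrt (inner01 h h) \<le> sqrt (1/4)" by (rule real_sqrt_le_mono)
    also have "sqrt (1/4) = (1/2::real)" by (simp add: real_sqrt_divide)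
    finally show "sqrt (inner01 h h) \<le> 1/2" .
  qed
  have hh: "inner01 h h = q\<^sup>2"
  proof -
    have 1: "(\<lambda>i. inner01 (F (s i)) (F (s i))) \<longlonglongrightarrow> q\<^sup>2"
      using LIMSEQ_subseq_LIMSEQ[OF nlim s] by (simp add: o_def F_def)
    have "(\<lambda>i. inner01 (F (s i)) (F (s i)) - inner01 h h) \<longlonglongrightarrow> 0"
    proof (rule tendsto_sandwich[where f="\<lambda>i. - norm01 (\<lambda>x. F (s i) x - h x)" and h="\<lambda>i. norm01 (\<lambda>x. F (s i) x - h x)"])
      have b: "\<bar>inner01 (F (s i)) (F (s i)) - inner01 h h\<bar> \<le> norm01 (\<lambda>x. F (s i) x - h x)" for i
      proof -
        have "\<bar>inner01 (F (s i)) (F (s i)) - inner01 h h\<bar> \<le> norm01 (\<lambda>x. F (s i) x - h x) * (norm01 (F (s i)) + norm01 h)"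
          by (rule ip_self_diff_bound[OF FL2 h])
        also have "\<dots> \<le> norm01 (\<lambda>x. F (s i) x - h x) * 1"
          using nF[of "s i"] nh by (intro mult_left_mono norm01_nonneg) auto
        finally show ?thesis by simp
      qed
      show "\<forall>\<^sub>F i in sequentially. - norm01 (\<lambda>x. F (s i) x - h x) \<le> inner01 (F (s i)) (F (s i)) - inner01 h h"
        using b by (intro always_eventually allI) (metis abs_le_D2 minus_le_iff)
      show "\<forall>\<^sub>F i in sequentially. inner01 (F (s i)) (F (s i)) - inner01 h h \<le> norm01 (\<lambda>x. F (s i) x - h x)"
        using b by (intro always_eventually allI) (metis abs_le_D1)
      show "(\<lambda>i. - norm01 (\<lambda>x. F (s i) x - h x)) \<longlonglongrightarrow> 0" using tendsto_minus[OF nFh] by simp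
      show "(\<lambda>i. norm01 (\<lambda>x. F (s i) x - h x)) \<longlonglongrightarrow> 0" by (rule nFh)
    qed
    then have "(\<lambda>i. inner01 (F (s i)) (F (s i))) \<longlonglongrightarrow> inner01 h h" by (simp add: LIM_zero_iff)
    from LIMSEQ_unique[OF this 1] show ?thesis .
  qed
  have hp: "norm01 h > 0" using hh rp by (simp add: norm01_def)
  have TT: "T N (T N h) x = q\<^sup>2 * h x" if x: "x \<in> {0..1}" for x
  proof -
    have l1: "(\<lambda>i. q\<^sup>2 * F (s i) x) \<longlonglongrightarrow> q\<^sup>2 * h x" by (intro tendsto_mult tendsto_const hlim[OF x])
    define Dn where "Dn k = norm01 (\<lambda>x. T N (T N (G k)) x - q\<^sup>2 * G k x)" for k
    have ThL2: "T N h \<in> L2_01" by (rule T_L2[OF h])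
    have bnd: "\<bar>q\<^sup>2 * F (s i) x - T N (T N h) x\<bar> \<le> (1/2) * (Dn (s i) + (1/2) * norm01 (\<lambda>x. F (s i) x - h x))" for i
    proof -
      let ?k = "s i"
      have rG: "(\<lambda>y. q\<^sup>2 * G ?k y) \<in> L2_01" by (rule L2_cmult[OF G])
      have TTG: "T N (F ?k) \<in> L2_01" by (rule T_L2[OF FL2])
      have "q\<^sup>2 * F ?k x - T N (T N h) x = T N (\<lambda>y. q\<^sup>2 * G ?k y - T N h y) x"
        by (simp add: T_diff[OF rG ThL2] T_cmult F_def)
      then have "\<bar>q\<^sup>2 * F ?k x - T N (T N h) x\<bar> \<le> norm01 (\<lambda>y. q\<^sup>2 * G ?k y - T N h y) / 2"
        using T_bound[OF x L2_diff[OF rG ThL2]] by simp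
      also have "norm01 (\<lambda>y. q\<^sup>2 * G ?k y - T N h y) \<le> norm01 (\<lambda>y. q\<^sup>2 * G ?k y - T N (F ?k) y) + norm01 (\<lambda>y. T N (F ?k) y - T N h y)"
        by (rule norm_diff_triangle01[OF rG ThL2 TTG])
      also have "norm01 (\<lambda>y. q\<^sup>2 * G ?k y - T N (F ?k) y) = Dn ?k"
      proof -
        have e: "(\<lambda>y. q\<^sup>2 * G ?k y - T N (F ?k) y) = (\<lambda>y. (-1) * (T N (T N (G ?k)) y - q\<^sup>2 * G ?k y))"
          by (rule ext) (simp add: F_def)
        show ?thesis unfolding e norm01_cmult Dn_def by simp
      qed
      also have "norm01 (\<lambda>y. T N (F ?k) y - T N h y) = norm01 (T N (\<lambda>y. F ?k y - h y))"
        by (rule arg_cong[where f=norm01], rule ext, rule T_diff[OF FL2 h, symmetric])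
      also have "\<dots> \<le> norm01 (\<lambda>y. F ?k y - h y) / 2" by (rule T_norm[OF L2_diff[OF FL2 h]])
      finally show ?thesis by (simp add: field_simps)
    qed
    have Dl: "(\<lambda>i. Dn (s i)) \<longlonglongrightarrow> 0"
      using LIMSEQ_subseq_LIMSEQ[OF Dlim s] by (simp add: o_def Dn_def)
    have z: "(\<lambda>i. (1/2) * (Dn (s i) + (1/2) * norm01 (\<lambda>x. F (s i) x - h x))) \<longlonglongrightarrow> 0"
      using tendsto_mult[OF tendsto_const[of "1/2"] tendsto_add[OF Dl tendsto_mult[OF tendsto_const[of "1/2"] nFh]]]
      by simp
    have "(\<lambda>i. q\<^sup>2 * F (s i) x - T N (T N h) x) \<longlonglongrightarrow> 0"
    proof (rule tendsto_sandwich[OF _ _ _ z])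
      show "(\<lambda>i. - ((1/2) * (Dn (s i) + (1/2) * norm01 (\<lambda>x. F (s i) x - h x)))) \<longlonglongrightarrow> 0"
        using tendsto_minus[OF z] by simp
      show "\<forall>\<^sub>F i in sequentially. - ((1/2) * (Dn (s i) + (1/2) * norm01 (\<lambda>x. F (s i) x - h x))) \<le> q\<^sup>2 * F (s i) x - T N (T N h) x"
        using bnd by (intro always_eventually allI) (metis abs_le_D2 minus_le_iff)
      show "\<forall>\<^sub>F i in sequentially. q\<^sup>2 * F (s i) x - T N (T N h) x \<le> (1/2) * (Dn (s i) + (1/2) * norm01 (\<lambda>x. F (s i) x - h x))"
        using bnd by (intro always_eventually allI) (metis abs_le_D1)
    qed
    then have "(\<lambda>i. q\<^sup>2 * F (s i) x) \<longlonglongrightarrow> T N (T N h) x" by (simp add: LIM_zero_iff)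
    from LIMSEQ_unique[OF this l1] show ?thesis .
  qed
  show ?thesis using h hp TT by blast
qed

end

lemma ip_comb: assumes A: "A \<in> L2_01" and B: "B \<in> L2_01"
  shows "inner01 (\<lambda>x. al * (A x - c * B x)) (\<lambda>x. al * (A x - c * B x))
    = al\<^sup>2 * (inner01 A A - 2 * c * inner01 A B + c\<^sup>2 * inner01 B B)"
proof -
  have cB: "(\<lambda>x. c * B x) \<in> L2_01" by (rule L2_cmult[OF B])
  have AB: "(\<lambda>x. A x - c * B x) \<in> L2_01" by (rule L2_diff[OF A cB])
  have "inner01 (\<lambda>x. A x - c * B x) (\<lambda>x. A x - c * B x) = inner01 A A - 2 * c * inner01 A B + c\<^sup>2 * inner01 B B"
  proof -
    have 1: "inner01 (\<lambda>x. A x - c * B x) (\<lambda>x. A x - c * B x) = inner01 A (\<lambda>x. A x - c * B x) - inner01 (\<lambda>x. c * B x) (\<lambda>x. A x - c * B x)"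
      by (rule ip_diff[OF A cB AB])
    have 2: "inner01 A (\<lambda>x. A x - c * B x) = inner01 A A - c * inner01 A B"
      using ip_diff2[OF A A cB] ip_cmult2[of A c B] by simp
    have 3: "inner01 (\<lambda>x. c * B x) (\<lambda>x. A x - c * B x) = c * (inner01 B A - c * inner01 B B)"
      using ip_cmult[of c B "\<lambda>x. A x - c * B x"] ip_diff2[OF B A cB] ip_cmult2[of B c B] by simp
    show ?thesis unfolding 1 2 3 using ip_sym[of B A] by (simp add: power2_eq_square algebra_simps)
  qed
  then show ?thesis by (simp add: ip_cmult ip_cmult2 power2_eq_square)
qed

context ES begin

lemma T_opnorm: assumes u: "u \<in> L2_01" shows "norm01 (T N u) \<le> norm01 u / \<bar>lam N\<bar>"
proof (rule ccontr)
  assume "\<not> ?thesis"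
  then have big: "norm01 (T N u) > norm01 u / \<bar>lam N\<bar>" by simp
  have lamp: "\<bar>lam N\<bar> > 0" using lam_nz by simp
  have nu: "norm01 u > 0"
  proof (rule ccontr)
    assume "\<not> norm01 u > 0"
    then have "norm01 u = 0" using norm01_nonneg[of u] by simp
    then show False using big T_norm[OF u, of N] by simp
  qed
  define f where "f k = (T N ^^ k) u" for k
  have fS: "f (Suc k) = T N (f k)" for k by (simp add: f_def)
  have fL2: "f k \<in> L2_01" for k
    by (induction k) (auto simp: f_def u T_L2)
  define n where "n k = norm01 (f k)" for k
  have idn: "(n (Suc k))\<^sup>2 = inner01 (f k) (f (Suc (Suc k)))" for k
  proof -
    have "(n (Suc k))\<^sup>2 = inner01 (T N (f k)) (T N (f k))" by (simp add: n_def ip_self_eq fS)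
    also have "\<dots> = inner01 (f k) (T N (T N (f k)))" by (rule T_selfadj[OF fL2 T_L2[OF fL2]])
    finally show ?thesis by (simp add: fS)
  qed
  have ineq: "(n (Suc k))\<^sup>2 \<le> n k * n (Suc (Suc k))" for k
    using CS[OF fL2 fL2, of k "Suc (Suc k)"] idn[of k] by (simp add: n_def)
  have n0: "n 0 > 0" using nu by (simp add: n_def f_def)
  have n1: "n (Suc 0) > 0"
  proof -
    have "norm01 u / \<bar>lam N\<bar> \<ge> 0" using nu lamp by simp
    then have "0 < norm01 (T N u)" using big by linarith
    then show ?thesis by (simp add: n_def f_def)
  qed
  have pos2: "n k > 0 \<and> n (Suc k) > 0" for k
  proof (induction k)
    case 0 then show ?case using n0 n1 by simp
  next
    case (Suc k)
    then have a: "n k > 0" "n (Suc k) > 0" by auto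
    have "0 < (n (Suc k))\<^sup>2" using a by simp
    also have "\<dots> \<le> n k * n (Suc (Suc k))" by (rule ineq)
    finally have "n (Suc (Suc k)) > 0" using a(1) by (simp add: zero_less_mult_iff)
    then show ?case using a by simp
  qed
  have np: "n k > 0" for k using pos2 by blast
  define rho where "rho k = n (Suc k) / n k" for k
  have rho_mono: "rho k \<le> rho (Suc k)" for k
  proof -
    have "n (Suc k) * n (Suc k) \<le> n (Suc (Suc k)) * n k" using ineq[of k] by (simp add: power2_eq_square mult.commute)
    then show ?thesis using np[of k] np[of "Suc k"] by (simp add: rho_def divide_simps)
  qed
  have rho_bd: "rho k \<le> 1/2" for k
  proof -
    have "n (Suc k) \<le> n k / 2" using T_norm[OF fL2, of N k] by (simp add: n_def fS)
    then show ?thesis using np[of k] by (simp add: rho_def divide_simps)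
  qed
  have inc: "incseq rho" by (rule incseq_SucI) (rule rho_mono)
  have bdd: "bdd_above (range rho)" by (rule bdd_aboveI[where M="1/2"]) (use rho_bd in auto)
  define q where "q = (SUP k. rho k)"
  have rho_lim: "rho \<longlonglongrightarrow> q" unfolding q_def by (rule LIMSEQ_incseq_SUP[OF bdd inc])
  have rho0: "rho 0 \<le> q" unfolding q_def by (rule cSUP_upper[OF _ bdd]) simp
  have rho0big: "rho 0 > 1 / \<bar>lam N\<bar>"
    using big nu lamp by (simp add: rho_def n_def f_def divide_simps mult.commute)
  have qbig: "q > 1 / \<bar>lam N\<bar>" using rho0 rho0big by simp
  have qp: "q > 0" using qbig lamp by (smt (verit) divide_pos_pos)
  define G where "G k = (\<lambda>y. (1 / n k) * f k y)" for k
  have GL2: "G k \<in> L2_01" for k unfolding G_def by (rule L2_cmult[OF fL2])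
  have nG: "norm01 (G k) \<le> 1" for k
    using np[of k] norm01_cmult[of "1 / n k" "f k"] by (simp add: G_def n_def)
  have TG: "T N (G k) = (\<lambda>y. (1 / n k) * f (Suc k) y)" for k
    by (rule ext) (simp only: G_def T_cmult fS)
  have TTG: "T N (T N (G k)) = (\<lambda>y. (1 / n k) * f (Suc (Suc k)) y)" for k
    unfolding TG by (rule ext) (simp only: T_cmult fS)
  have nlim: "(\<lambda>k. inner01 (T N (G k)) (T N (G k))) \<longlonglongrightarrow> q\<^sup>2"
  proof -
    have "inner01 (T N (G k)) (T N (G k)) = (rho k)\<^sup>2" for k
    proof -
      have "inner01 (T N (G k)) (T N (G k)) = (1/n k) * ((1/n k) * inner01 (f (Suc k)) (f (Suc k)))"
        unfolding TG by (simp only: ip_cmult ip_cmult2)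
      also have "inner01 (f (Suc k)) (f (Suc k)) = (n (Suc k))\<^sup>2" by (simp add: n_def ip_self_eq)
      finally show ?thesis using np[of k] by (simp add: rho_def power2_eq_square)
    qed
    then show ?thesis using tendsto_power[OF rho_lim, of 2] by simp
  qed
  have Dsq: "(norm01 (\<lambda>x. T N (T N (G k)) x - q\<^sup>2 * G k x))\<^sup>2
      = (rho (Suc k) * rho k)\<^sup>2 - 2 * q\<^sup>2 * (rho k)\<^sup>2 + (q\<^sup>2)\<^sup>2" for k
  proof -
    have e: "(\<lambda>x. T N (T N (G k)) x - q\<^sup>2 * G k x) = (\<lambda>x. (1 / n k) * (f (Suc (Suc k)) x - q\<^sup>2 * f k x))"
      unfolding TTG by (rule ext) (simp add: G_def algebra_simps)
    have "(norm01 (\<lambda>x. T N (T N (G k)) x - q\<^sup>2 * G k x))\<^sup>2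
       = (1 / n k)\<^sup>2 * (inner01 (f (Suc (Suc k))) (f (Suc (Suc k))) - 2 * q\<^sup>2 * inner01 (f (Suc (Suc k))) (f k) + (q\<^sup>2)\<^sup>2 * inner01 (f k) (f k))"
      unfolding e ip_self_eq[symmetric] by (rule ip_comb[OF fL2 fL2])
    also have "inner01 (f (Suc (Suc k))) (f k) = (n (Suc k))\<^sup>2" using idn[of k] ip_sym by metis
    also have "inner01 (f (Suc (Suc k))) (f (Suc (Suc k))) = (n (Suc (Suc k)))\<^sup>2" by (simp add: n_def ip_self_eq)
    also have "inner01 (f k) (f k) = (n k)\<^sup>2" by (simp add: n_def ip_self_eq)
    finally show ?thesis using np[of k] np[of "Suc k"]
      by (simp add: rho_def power2_eq_square field_simps)
  qed
  have Dlim: "(\<lambda>k. norm01 (\<lambda>x. T N (T N (G k)) x - q\<^sup>2 * G k x)) \<longlonglongrightarrow> 0"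
  proof -
    have rho_lim': "(\<lambda>k. rho (Suc k)) \<longlonglongrightarrow> q" using rho_lim by (rule LIMSEQ_Suc)
    have "(\<lambda>k. (rho (Suc k) * rho k)\<^sup>2 - 2 * q\<^sup>2 * (rho k)\<^sup>2 + (q\<^sup>2)\<^sup>2) \<longlonglongrightarrow> (q * q)\<^sup>2 - 2 * q\<^sup>2 * q\<^sup>2 + (q\<^sup>2)\<^sup>2"
      by (intro tendsto_intros rho_lim rho_lim')
    then have "(\<lambda>k. (norm01 (\<lambda>x. T N (T N (G k)) x - q\<^sup>2 * G k x))\<^sup>2) \<longlonglongrightarrow> 0"
      unfolding Dsq by (simp add: power2_eq_square)
    from tendsto_real_sqrt[OF this] show ?thesis by (simp add: norm01_nonneg)
  qed
  obtain h where h: "h \<in> L2_01" "norm01 h > 0" "\<And>x. x \<in> {0..1} \<Longrightarrow> T N (T N h) x = q\<^sup>2 * h x"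
    using compact_step[OF GL2 nG qp Dlim nlim] by blast
  have "q \<le> 1 / \<bar>lam N\<bar>" by (rule eigen_from_limit[OF h(1,2) qp h(3)])
  then show False using qbig by simp
qed

end

lemma measure_LM_Icc: "0 \<le> c \<Longrightarrow> c \<le> d \<Longrightarrow> d \<le> 1 \<Longrightarrow> integral\<^sup>L LM (indicator {c..d} :: real \<Rightarrow> real) = d - c"
proof -
  assume cd: "0 \<le> c" "c \<le> d" "d \<le> 1"
  then have "{c..d} \<inter> {0..1} = {c..d}" by auto
  then have "integral\<^sup>L LM (indicator {c..d} :: real \<Rightarrow> real) = measure LM {c..d}"
    using Bochner_Integration.integral_indicator[of LM "{c..d}"] by (simp only: space_LM)
  also have "\<dots> = measure lebesgue {c..d}" using cd by (subst measure_restrict_space) auto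
  also have "\<dots> = d - c" using cd by simp
  finally show ?thesis .
qed

context ES begin

lemma asum_le: "x \<in> {0..1} \<Longrightarrow> (\<Sum>j<N. (a j x)\<^sup>2) \<le> 1/4"
proof -
  assume x: "x \<in> {0..1}"
  have "0 \<le> inner01 (r N x) (r N x)" by (rule ip_nonneg)
  then have "(\<Sum>j<N. (a j x)\<^sup>2) \<le> K2 x x" using r_self[OF x] by simp
  also have "K2 x x \<le> 1/4" using ipKK[of x] by (simp add: K2_ip)
  finally show ?thesis .
qed

lemma lam_sum: "(\<Sum>j<N. 1 / (lam j)\<^sup>2) \<le> 1/4"
proof -
  have ia: "integrable LM (\<lambda>x. (a j x)\<^sup>2)" for j by (rule L2_sq[OF a_L2])
  have "int01 (\<lambda>x. (a j x)\<^sup>2) = 1 / (lam j)\<^sup>2" for j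
  proof -
    have "int01 (\<lambda>x. (a j x)\<^sup>2) = inner01 (\<lambda>x. (1 / lam j) * phi j x) (\<lambda>x. (1 / lam j) * phi j x)"
      by (simp add: inner01_def a_def power2_eq_square)
    also have "\<dots> = (1 / lam j) * ((1 / lam j) * inner01 (phi j) (phi j))" by (simp only: ip_cmult ip_cmult2)
    finally show ?thesis by (simp add: orth power2_eq_square)
  qed
  then have "(\<Sum>j<N. 1 / (lam j)\<^sup>2) = int01 (\<lambda>x. \<Sum>j<N. (a j x)\<^sup>2)"
    using ia by (simp add: Bochner_Integration.integral_sum)
  also have "\<dots> \<le> 1/4"
  proof (rule int_le_const)
    show "integrable LM (\<lambda>x. \<Sum>j<N. (a j x)\<^sup>2)" using ia by auto
  qed (rule asum_le)
  finally show ?thesis .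
qed

lemma lam_inv_lim: "(\<lambda>N. 1 / \<bar>lam N\<bar>) \<longlonglongrightarrow> 0"
proof -
  have "summable (\<lambda>j. 1 / (lam j)\<^sup>2)"
    by (rule summableI_nonneg_bounded[where x="1/4"]) (simp, rule lam_sum)
  then have "(\<lambda>j. 1 / (lam j)\<^sup>2) \<longlonglongrightarrow> 0" by (rule summable_LIMSEQ_zero)
  from tendsto_real_sqrt[OF this] show ?thesis by (simp add: real_sqrt_divide)
qed

lemma unif_small:
  assumes ep: "0 < ep" "ep \<le> 1" and et: "et > 0"
  shows "\<exists>N0. \<forall>N\<ge>N0. \<forall>y\<in>{ep..1}. inner01 (r N y) (r N y) \<le> et"
proof -
  define S where "S = {ep/2..1} \<times> {ep/2..(1::real)}"
  have cont: "continuous_on S (\<lambda>p. K2 (fst p) (snd p))"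
  proof (rule continuous_at_imp_continuous_on, intro ballI)
    fix p assume "p \<in> S"
    then have "fst p \<noteq> 0" "snd p \<noteq> 0" using ep by (auto simp: S_def)
    from K2_cont[OF this] show "isCont (\<lambda>p. K2 (fst p) (snd p)) p" by simp
  qed
  have "uniformly_continuous_on S (\<lambda>p. K2 (fst p) (snd p))"
    by (rule compact_uniformly_continuous[OF cont]) (simp add: S_def compact_Times)
  then obtain d0 where d0: "d0 > 0"
    "\<And>p p'. p \<in> S \<Longrightarrow> p' \<in> S \<Longrightarrow> dist p' p < d0 \<Longrightarrow> dist (K2 (fst p') (snd p')) (K2 (fst p) (snd p)) < et\<^sup>2/4"
    unfolding uniformly_continuous_on_def using et by (metis divide_pos_pos zero_less_numeral zero_less_power)
  have Wb: "norm01 (\<lambda>t. K y t - K z t) \<le> et" if yz: "y \<in> {ep/2..1}" "z \<in> {ep/2..1}" "\<bar>y - z\<bar> < d0" for y z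
  proof -
    have e1: "\<bar>K2 y y - K2 y z\<bar> < et\<^sup>2/4"
      using d0(2)[of "(y,z)" "(y,y)"] yz by (auto simp: S_def dist_Pair_Pair dist_real_def)
    have e2: "\<bar>K2 z z - K2 z y\<bar> < et\<^sup>2/4"
      using d0(2)[of "(z,y)" "(z,z)"] yz by (auto simp: S_def dist_Pair_Pair dist_real_def abs_minus_commute)
    have "inner01 (\<lambda>t. 1 * (K y t - 1 * K z t)) (\<lambda>t. 1 * (K y t - 1 * K z t)) = 1\<^sup>2 * (K2 y y - 2 * 1 * K2 y z + 1\<^sup>2 * K2 z z)"
      unfolding K2_ip by (rule ip_comb[OF Kx_L2 Kx_L2])
    then have "inner01 (\<lambda>t. K y t - K z t) (\<lambda>t. K y t - K z t) = (K2 y y - K2 y z) + (K2 z z - K2 z y)"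
      by (simp add: K2_sym[of z y])
    also have "\<dots> \<le> et\<^sup>2" using e1 e2 by linarith
    finally have "sqrt (inner01 (\<lambda>t. K y t - K z t) (\<lambda>t. K y t - K z t)) \<le> sqrt (et\<^sup>2)" by (rule real_sqrt_le_mono)
    then show ?thesis using et by (simp add: norm01_def)
  qed
  define dl where "dl = min (d0/2) (ep/2)"
  have dl: "dl > 0" "dl < d0" "dl \<le> ep/2" using d0 ep by (auto simp: dl_def)
  have "\<forall>\<^sub>F N in sequentially. 1 / \<bar>lam N\<bar> < et * sqrt dl"
    using order_tendstoD(2)[OF lam_inv_lim, of "et * sqrt dl"] et dl by simp
  then obtain N0 where N0: "\<And>N. N \<ge> N0 \<Longrightarrow> 1 / \<bar>lam N\<bar> < et * sqrt dl"
    unfolding eventually_sequentially by blast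
  show ?thesis
  proof (intro exI[of _ N0] allI impI ballI)
    fix N y assume N: "N \<ge> N0" and y: "y \<in> {ep..1}"
    have y01: "y \<in> {0..1}" using y ep by auto
    define u where "u = r N y"
    define v where "v = T N u"
    have uL2: "u \<in> L2_01" by (simp add: u_def r_L2)
    have vL2: "v \<in> L2_01" by (simp add: v_def T_L2[OF uL2])
    have nu: "norm01 u \<le> 1/2" unfolding u_def by (rule r_norm[OF y01])
    have vy: "v y = inner01 u u" unfolding v_def using T_ip[OF y01 uL2] by (simp add: u_def)
    have lamp: "\<bar>lam N\<bar> > 0" using lam_nz by simp
    have nv: "norm01 v \<le> (1/2) / \<bar>lam N\<bar>"
    proof -
      have "norm01 v \<le> norm01 u / \<bar>lam N\<bar>" unfolding v_def by (rule T_opnorm[OF uL2])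
      also have "\<dots> \<le> (1/2) / \<bar>lam N\<bar>" using nu lamp by (intro divide_right_mono) auto
      finally show ?thesis .
    qed
    define I where "I = {y - dl..y}"
    have I01: "y - dl \<ge> 0" "y \<le> 1" using y dl ep by auto
    have vdiff: "\<bar>v y - v z\<bar> \<le> et / 2" if z: "z \<in> I" for z
    proof -
      have z01: "z \<in> {0..1}" using z I01 by (auto simp: I_def)
      have "\<bar>v y - v z\<bar> \<le> norm01 (\<lambda>t. K y t - K z t) * norm01 u"
        unfolding v_def by (rule T_lip[OF y01 z01 uL2])
      also have "\<dots> \<le> et * (1/2)"
      proof (rule mult_mono[OF Wb nu])
        show "y \<in> {ep/2..1}" using y ep by auto
        show "z \<in> {ep/2..1}" using z y dl by (auto simp: I_def)
        show "\<bar>y - z\<bar> < d0" using z dl by (auto simp: I_def)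
      qed (use et norm01_nonneg in auto)
      finally show ?thesis by simp
    qed
    define ind where "ind = (indicator I :: real \<Rightarrow> real)"
    have indm: "ind \<in> borel_measurable LM" unfolding ind_def by (rule borel_LM) (simp add: I_def)
    have indL2: "ind \<in> L2_01" by (rule L2_bounded[OF indm, of 1]) (simp add: ind_def indicator_def)
    have int_ind: "int01 ind = dl" unfolding ind_def I_def using measure_LM_Icc[of "y - dl" y] I01 dl by simp
    have nind: "norm01 ind = sqrt dl"
    proof -
      have "(\<lambda>x. ind x * ind x) = ind" by (rule ext) (simp add: ind_def indicator_def)
      then have "inner01 ind ind = int01 ind" unfolding inner01_def by simp
      then show ?thesis by (simp add: norm01_def int_ind)
    qed
    define av where "av z = \<bar>v z\<bar>" for z
    have avL2: "av \<in> L2_01"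
      unfolding av_def using vL2 by (auto simp: L2_01_def)
    have nav: "norm01 av = norm01 v"
      unfolding norm01_def inner01_def av_def by (simp add: abs_mult[symmetric])
    have cs: "inner01 ind av \<le> sqrt dl * norm01 v"
      using CS[OF indL2 avL2] nind nav by simp
    have ineq: "int01 (\<lambda>z. ind z * v y) \<le> int01 (\<lambda>z. ind z * av z + ind z * (et/2))"
    proof (rule integral_mono)
      show "integrable LM (\<lambda>z. ind z * v y)" using L2_int[OF indL2] by simp
      show "integrable LM (\<lambda>z. ind z * av z + ind z * (et/2))"
        using L2_prod[OF indL2 avL2] L2_int[OF indL2] by simp
      fix z assume "z \<in> space LM"
      show "ind z * v y \<le> ind z * av z + ind z * (et/2)"
      proof (cases "z \<in> I")
        case True
        have "v y \<le> \<bar>v z\<bar> + et/2" using vdiff[OF True] by arith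
        then show ?thesis using True by (simp add: ind_def av_def)
      qed (simp add: ind_def)
    qed
    have lhs: "int01 (\<lambda>z. ind z * v y) = v y * dl" using int_ind by simp
    have rhs: "int01 (\<lambda>z. ind z * av z + ind z * (et/2)) = inner01 ind av + dl * (et/2)"
      using L2_prod[OF indL2 avL2] L2_int[OF indL2] int_ind by (simp add: inner01_def)
    have vyd: "v y * dl \<le> sqrt dl * norm01 v + dl * (et/2)" using ineq lhs rhs cs by linarith
    have sp: "sqrt dl > 0" using dl(1) by simp
    have dls: "dl = sqrt dl * sqrt dl" using dl(1) by simp
    have e1: "sqrt dl * (sqrt dl * v y) = dl * v y" using dls by (metis mult.assoc)
    have e2: "sqrt dl * (norm01 v + sqrt dl * (et/2)) = sqrt dl * norm01 v + dl * (et/2)"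
      using dls by (metis distrib_left mult.assoc)
    have "sqrt dl * (sqrt dl * v y) \<le> sqrt dl * (norm01 v + sqrt dl * (et/2))"
      unfolding e1 e2 using vyd by (simp add: mult.commute)
    then have "sqrt dl * v y \<le> norm01 v + sqrt dl * (et/2)" using sp by simp
    then have "v y \<le> norm01 v / sqrt dl + et/2" using sp by (simp add: field_simps)
    also have "norm01 v / sqrt dl \<le> et / 2"
    proof -
      have "norm01 v \<le> (1/2) * (1 / \<bar>lam N\<bar>)" using nv by simp
      also have "\<dots> \<le> (1/2) * (et * sqrt dl)" using N0[OF N] by simp
      finally show ?thesis using dl(1) by (simp add: field_simps)
    qed
    finally show "inner01 (r N y) (r N y) \<le> et" using vy by (simp add: u_def)
  qed
qed

end

context ES begin

lemma r_norm_lim: assumes x: "x \<in> {0<..1}" shows "(\<lambda>n. norm01 (r n x)) \<longlonglongrightarrow> 0"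
proof -
  have "(\<lambda>n. inner01 (r n x) (r n x)) \<longlonglongrightarrow> 0"
  proof (rule LIMSEQ_I)
    fix e :: real assume e: "e > 0"
    have "0 < x" "x \<le> 1" "e/2 > 0" using x e by auto
    from unif_small[OF this] obtain N0 where N0: "\<forall>N\<ge>N0. \<forall>y\<in>{x..1}. inner01 (r N y) (r N y) \<le> e/2"
      by blast
    show "\<exists>no. \<forall>n\<ge>no. norm (inner01 (r n x) (r n x) - 0) < e"
    proof (intro exI allI impI)
      fix n assume "n \<ge> N0"
      then have "inner01 (r n x) (r n x) \<le> e/2" using N0 x by auto
      then show "norm (inner01 (r n x) (r n x) - 0) < e" using ip_nonneg[of "r n x"] e by simp
    qed
  qed
  from tendsto_real_sqrt[OF this] show ?thesis by (simp add: norm01_def)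
qed

lemma r0_norm: "norm01 (r n 0) = 0"
  by (simp add: r_0 norm01_def inner01_def)

lemma diff_bound: assumes x: "x \<in> {0..1}" and y: "y \<in> {0..1}"
  shows "\<bar>K2 x y - (\<Sum>j<n. a j x * a j y)\<bar> \<le> norm01 (r n x) * norm01 (r n y)"
  using r_ip[OF x y, of n] CS[OF r_L2 r_L2, of n x n y] by simp

end

theorem theorem2p11:
  fixes phi :: "nat \<Rightarrow> real \<Rightarrow> real" and lam :: "nat \<Rightarrow> real"
  assumes "max_eigen_system phi lam"
  shows "(\<forall>\<epsilon>::real. 0 < \<epsilon> \<and> \<epsilon> \<le> 1 \<longrightarrow>
            uniformly_convergent_on (({0..1} \<times> {0..1}) - ({0<..<\<epsilon>} \<times> {0<..<\<epsilon>}))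
              (\<lambda>n (x, y). \<Sum>j<n. phi j x * phi j y / (lam j)\<^sup>2))
       \<and> (\<forall>x\<in>{0..1}. \<forall>y\<in>{0..1}.
            summable (\<lambda>j. \<bar>phi j x * phi j y / (lam j)\<^sup>2\<bar>) \<and>
            (\<lambda>j. phi j x * phi j y / (lam j)\<^sup>2) sums K2 x y)"
proof -
  interpret ES phi lam by unfold_locales (rule assms)
  have tm: "phi j x * phi j y / (lam j)\<^sup>2 = a j x * a j y" for j x y
    by (simp add: a_def power2_eq_square)
  have P2: "summable (\<lambda>j. \<bar>phi j x * phi j y / (lam j)\<^sup>2\<bar>) \<and> (\<lambda>j. phi j x * phi j y / (lam j)\<^sup>2) sums K2 x y"
    if x: "x \<in> {0..1}" and y: "y \<in> {0..1}" for x y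
  proof
    show "summable (\<lambda>j. \<bar>phi j x * phi j y / (lam j)\<^sup>2\<bar>)"
      unfolding tm
    proof (rule summableI_nonneg_bounded[where x="1/4"])
      fix n
      have "(\<Sum>j<n. \<bar>a j x * a j y\<bar>) \<le> (\<Sum>j<n. ((a j x)\<^sup>2 + (a j y)\<^sup>2) / 2)"
      proof (rule sum_mono)
        fix j
        have "0 \<le> (\<bar>a j x\<bar> - \<bar>a j y\<bar>)\<^sup>2" by simp
        then show "\<bar>a j x * a j y\<bar> \<le> ((a j x)\<^sup>2 + (a j y)\<^sup>2) / 2" by (simp add: power2_diff abs_mult)
      qed
      also have "\<dots> = ((\<Sum>j<n. (a j x)\<^sup>2) + (\<Sum>j<n. (a j y)\<^sup>2)) / 2"
        by (simp only: sum.distrib[symmetric] sum_divide_distrib)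
      also have "\<dots> \<le> (1/4 + 1/4) / 2" using asum_le[OF x, of n] asum_le[OF y, of n] by simp
      finally show "(\<Sum>j<n. \<bar>a j x * a j y\<bar>) \<le> 1/4" by simp
    qed simp
    show "(\<lambda>j. phi j x * phi j y / (lam j)\<^sup>2) sums K2 x y"
      unfolding tm sums_def
    proof (cases "x = 0")
      case True
      have "K2 x y - (\<Sum>j<n. a j x * a j y) = 0" for n
        using diff_bound[OF x y, of n] True r0_norm by simp
      then show "(\<lambda>n. \<Sum>j<n. a j x * a j y) \<longlonglongrightarrow> K2 x y" by simp
    next
      case False
      then have x': "x \<in> {0<..1}" using x by auto
      have "(\<lambda>n. K2 x y - (\<Sum>j<n. a j x * a j y)) \<longlonglongrightarrow> 0"
      proof (rule tendsto_sandwich[where f="\<lambda>n. - (norm01 (r n x) * (1/2))" and h="\<lambda>n. norm01 (r n x) * (1/2)"])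
        have b: "\<bar>K2 x y - (\<Sum>j<n. a j x * a j y)\<bar> \<le> norm01 (r n x) * (1/2)" for n
          using diff_bound[OF x y, of n] mult_left_mono[OF r_norm[OF y, of n] norm01_nonneg[of "r n x"]] by simp
        show "\<forall>\<^sub>F n in sequentially. - (norm01 (r n x) * (1/2)) \<le> K2 x y - (\<Sum>j<n. a j x * a j y)"
          using b by (intro always_eventually allI) (metis abs_le_D2 minus_le_iff)
        show "\<forall>\<^sub>F n in sequentially. K2 x y - (\<Sum>j<n. a j x * a j y) \<le> norm01 (r n x) * (1/2)"
          using b by (intro always_eventually allI) (metis abs_le_D1)
        show "(\<lambda>n. - (norm01 (r n x) * (1/2))) \<longlonglongrightarrow> 0"
          using tendsto_minus[OF tendsto_mult[OF r_norm_lim[OF x'] tendsto_const[of "1/2"]]] by simp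
        show "(\<lambda>n. norm01 (r n x) * (1/2)) \<longlonglongrightarrow> 0"
          using tendsto_mult[OF r_norm_lim[OF x'] tendsto_const[of "1/2"]] by simp
      qed
      from tendsto_diff[OF tendsto_const[of "K2 x y"] this]
      show "(\<lambda>n. \<Sum>j<n. a j x * a j y) \<longlonglongrightarrow> K2 x y" by simp
    qed
  qed
  have P1: "uniformly_convergent_on (({0..1} \<times> {0..1}) - ({0<..<ep} \<times> {0<..<ep}))
              (\<lambda>n (x, y). \<Sum>j<n. phi j x * phi j y / (lam j)\<^sup>2)"
    if ep: "0 < ep" "ep \<le> 1" for ep :: real
    unfolding uniformly_convergent_on_def
  proof (intro exI uniform_limitI)
    fix e :: real assume e: "e > 0"
    have "e\<^sup>2 > 0" using e by simp
    from unif_small[OF ep this] obtain N0 where N0: "\<forall>N\<ge>N0. \<forall>y\<in>{ep..1}. inner01 (r N y) (r N y) \<le> e\<^sup>2"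
      by blast
    have small: "norm01 (r N y) \<le> e" if "N \<ge> N0" "y \<in> {ep..1}" for N y
    proof -
      have "sqrt (inner01 (r N y) (r N y)) \<le> sqrt (e\<^sup>2)" using N0 that by (intro real_sqrt_le_mono) blast
      then show ?thesis using e by (simp add: norm01_def)
    qed
    show "\<forall>\<^sub>F n in sequentially. \<forall>p\<in>({0..1} \<times> {0..1}) - ({0<..<ep} \<times> {0<..<ep}).
        dist ((\<lambda>n (x, y). \<Sum>j<n. phi j x * phi j y / (lam j)\<^sup>2) n p) ((\<lambda>(x, y). K2 x y) p) < e"
      unfolding eventually_sequentially
    proof (intro exI allI impI ballI)
      fix n p assume n: "n \<ge> N0" and p: "p \<in> ({0..1} \<times> {0..1}) - ({0<..<ep} \<times> {0<..<ep})"
      obtain x y where pxy: "p = (x, y)" by (cases p)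
      have x: "x \<in> {0..1}" and y: "y \<in> {0..1}" using p pxy by auto
      have db: "\<bar>K2 x y - (\<Sum>j<n. a j x * a j y)\<bar> \<le> norm01 (r n x) * norm01 (r n y)"
        by (rule diff_bound[OF x y])
      have "\<bar>K2 x y - (\<Sum>j<n. a j x * a j y)\<bar> < e"
      proof (cases "x = 0 \<or> y = 0")
        case True
        then have z: "norm01 (r n x) * norm01 (r n y) = 0" using r0_norm by auto
        show ?thesis using db z e by linarith
      next
        case False
        then have "x \<ge> ep \<or> y \<ge> ep" using p pxy x y by auto
        then show ?thesis
        proof
          assume "x \<ge> ep"
          then have "norm01 (r n x) \<le> e" using small[OF n] x by auto
          then have "norm01 (r n x) * norm01 (r n y) \<le> e * (1/2)"
            by (intro mult_mono r_norm[OF y] norm01_nonneg) (use e in auto)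
          then show ?thesis using db e by simp
        next
          assume "y \<ge> ep"
          then have "norm01 (r n y) \<le> e" using small[OF n] y by auto
          then have "norm01 (r n x) * norm01 (r n y) \<le> (1/2) * e"
            by (intro mult_mono r_norm[OF x] norm01_nonneg) (use e in auto)
          then show ?thesis using db e by simp
        qed
      qed
      then show "dist ((\<lambda>n (x, y). \<Sum>j<n. phi j x * phi j y / (lam j)\<^sup>2) n p) ((\<lambda>(x, y). K2 x y) p) < e"
        by (simp add: pxy tm dist_real_def abs_minus_commute)
    qed
  qed
  show ?thesis using P1 P2 by blast
qed

end
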